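(* Let $F$ be an integral form, and assume that $F$ has a simple linear factor over $\mathbb{Q}_p$, i.e. there is a non-zero linear form $L$ with coefficients in $\mathbb{Q}_p$ such that $L$ divides $F$ but $L^2$ does not divide $F$ in $\mathbb{Q}_p[x_0,\dots,x_r]$. Then $R(F)$ is dense in $\mathbb{Q}_p$.
   Context: An integral form is a homogeneous polynomial with integer coefficients. For an integral form $F$ in $r+1$ variables, $R(F)=\{F(\overline{x})/F(\overline{y}) : \overline{x},\overline{y}\in\mathbb{Z}^{r+1},\ F(\overline{y})\neq 0\}$; density is in the $p$-adic topology. *)

theory Defs
  imports "HOL-Library.Poly_Mapping" "HOL-Computational_Algebra.Fraction_Field"
    "HOL-Computational_Algebra.Primes" "HOL-Library.Cardinality"
begin

class prime_card = finite +
  assumes prime_card: "prime CARD('a)"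

lemma prime_card_gt1: "int CARD('a::prime_card) > 1"
  using prime_card[where 'a='a] prime_gt_1_nat by auto

definition padic_seqs :: "int \<Rightarrow> (nat \<Rightarrow> int) set" where
  "padic_seqs p = {f. \<forall>n. 0 \<le> f n \<and> f n < p ^ n \<and> f (Suc n) mod (p ^ n) = f n}"

lemma padic_seqs_const: "p > 0 \<Longrightarrow> (\<lambda>n. x mod p ^ n) \<in> padic_seqs p"
  by (auto simp: padic_seqs_def mod_mod_cancel le_imp_power_dvd)

lemma padic_seqs_op:
  fixes p :: int and h :: "int \<Rightarrow> int \<Rightarrow> int"
  assumes p: "p > 0" and f: "f \<in> padic_seqs p" and g: "g \<in> padic_seqs p"
    and h: "\<And>a b m. h (a mod m) (b mod m) mod m = h a b mod m"
  shows "(\<lambda>n. h (f n) (g n) mod p ^ n) \<in> padic_seqs p"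
  unfolding padic_seqs_def
proof (intro CollectI allI conjI)
  fix n
  show "0 \<le> h (f n) (g n) mod p ^ n" using p by simp
  show "h (f n) (g n) mod p ^ n < p ^ n" using p by simp
  have d: "p ^ n dvd p ^ Suc n" by (simp add: le_imp_power_dvd)
  have "h (f (Suc n)) (g (Suc n)) mod p ^ Suc n mod p ^ n = h (f (Suc n)) (g (Suc n)) mod p ^ n"
    using d by (simp add: mod_mod_cancel)
  also have "\<dots> = h (f (Suc n) mod p ^ n) (g (Suc n) mod p ^ n) mod p ^ n" by (simp add: h)
  also have "\<dots> = h (f n) (g n) mod p ^ n" using f g by (simp add: padic_seqs_def)
  finally show "h (f (Suc n)) (g (Suc n)) mod p ^ Suc n mod p ^ n = h (f n) (g n) mod p ^ n" .
qed

typedef ('p::prime_card) padic_int = "padic_seqs (int CARD('p))"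
  morphisms padic_digits Abs_padic_int
  by (rule exI[of _ "\<lambda>_. 0"]) (simp add: padic_seqs_def)

setup_lifting type_definition_padic_int

lemma card_pos: "int CARD('a::prime_card) > 0"
  using prime_card_gt1[where 'a='a] by simp

instantiation padic_int :: (prime_card) comm_ring_1
begin

lift_definition zero_padic_int :: "'a padic_int" is "\<lambda>_. 0" by (simp add: padic_seqs_def)
lift_definition one_padic_int :: "'a padic_int" is "\<lambda>n. 1 mod (int CARD('a) ^ n)"
  by (rule padic_seqs_const[OF card_pos])
lift_definition plus_padic_int :: "'a padic_int \<Rightarrow> 'a padic_int \<Rightarrow> 'a padic_int"
  is "\<lambda>f g n. (f n + g n) mod (int CARD('a) ^ n)"
  by (rule padic_seqs_op[OF card_pos, where h="(+)"]) (auto simp: mod_add_eq)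
lift_definition times_padic_int :: "'a padic_int \<Rightarrow> 'a padic_int \<Rightarrow> 'a padic_int"
  is "\<lambda>f g n. (f n * g n) mod (int CARD('a) ^ n)"
  by (rule padic_seqs_op[OF card_pos, where h="(*)"]) (auto simp: mod_mult_eq)
lift_definition uminus_padic_int :: "'a padic_int \<Rightarrow> 'a padic_int"
  is "\<lambda>f n. (- f n) mod (int CARD('a) ^ n)"
  by (rule padic_seqs_op[OF card_pos, where h="\<lambda>a b. - a"]) (auto simp: mod_minus_eq)
definition minus_padic_int :: "'a padic_int \<Rightarrow> 'a padic_int \<Rightarrow> 'a padic_int"
  where "minus_padic_int x y = x + - y"

instance
proof
  fix a b c :: "'a padic_int"
  show "a * b * c = a * (b * c)"
    by transfer (auto simp: mod_mult_left_eq mod_mult_right_eq mult.assoc)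
  show "a * b = b * a" by transfer (simp add: mult.commute)
  show "1 * a = a"
    by transfer (auto simp: mod_mult_left_eq padic_seqs_def)
  show "a + b + c = a + (b + c)"
    by transfer (auto simp: mod_add_left_eq mod_add_right_eq add.assoc)
  show "a + b = b + a" by transfer (simp add: add.commute)
  show "0 + a = a" by transfer (auto simp: padic_seqs_def)
  show "- a + a = 0" by transfer (auto simp: mod_add_left_eq)
  show "a - b = a + - b" by (simp add: minus_padic_int_def)
  show "(a + b) * c = a * c + b * c"
    by transfer (auto simp: mod_mult_left_eq mod_add_eq distrib_right)
  show "(0::'a padic_int) \<noteq> 1"
  proof transfer
    have "int CARD('a) > 1" by (rule prime_card_gt1)
    hence "(1::int) mod int CARD('a) ^ 1 = 1" by simp
    thus "(\<lambda>_. 0::int) \<noteq> (\<lambda>n. 1 mod int CARD('a) ^ n)" by (metis zero_neq_one)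
  qed
qed
end

lemma padic_seqs_mod_le:
  assumes f: "f \<in> padic_seqs p" and p: "p > 0" and mn: "n \<le> m"
  shows "f m mod p ^ n = f n"
  using mn
proof (induction m rule: dec_induct)
  case base
  then show ?case using f by (auto simp: padic_seqs_def)
next
  case (step m)
  have d: "p ^ n dvd p ^ m" using step.hyps by (simp add: le_imp_power_dvd)
  have "f (Suc m) mod p ^ n = f (Suc m) mod p ^ m mod p ^ n" using d by (simp add: mod_mod_cancel)
  also have "\<dots> = f m mod p ^ n" using f by (simp add: padic_seqs_def)
  finally show ?case using step.IH by simp
qed

lemma padic_seqs_val:
  assumes f: "f \<in> padic_seqs p" and p: "p > 0" and nz: "f \<noteq> (\<lambda>_. 0)"
  shows "\<exists>a u. \<forall>m\<ge>Suc a. f m = p ^ a * u m \<and> \<not> p dvd u m"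
proof -
  have f0: "f 0 = 0"
  proof -
    have "0 \<le> f 0 \<and> f 0 < p ^ 0" using f unfolding padic_seqs_def by blast
    thus ?thesis by simp
  qed
  have ex: "\<exists>k. f (Suc k) \<noteq> 0"
  proof (rule ccontr)
    assume "\<not> ?thesis"
    hence "\<forall>k. f k = 0" using f0 by (metis not0_implies_Suc)
    thus False using nz by auto
  qed
  define a where "a = (LEAST k. f (Suc k) \<noteq> 0)"
  have fa1: "f (Suc a) \<noteq> 0" unfolding a_def by (rule LeastI_ex[OF ex])
  have fa: "f a = 0"
  proof (cases a)
    case 0 then show ?thesis using f0 by simp
  next
    case (Suc k)
    have "k < a" using Suc by simp
    hence "\<not> f (Suc k) \<noteq> 0" unfolding a_def by (rule not_less_Least)
    then show ?thesis using Suc by simp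
  qed
  define u where "u m = f m div p ^ a" for m
  have "\<forall>m\<ge>Suc a. f m = p ^ a * u m \<and> \<not> p dvd u m"
  proof (intro allI impI conjI)
    fix m assume m: "Suc a \<le> m"
    have "f m mod p ^ a = 0" using padic_seqs_mod_le[OF f p, of a m] m fa by simp
    thus e: "f m = p ^ a * u m" unfolding u_def by (metis dvd_mult_div_cancel mod_0_imp_dvd)
    have "f m mod p ^ Suc a = f (Suc a)" using padic_seqs_mod_le[OF f p m] .
    hence "\<not> p ^ Suc a dvd f m" using fa1 by (metis dvd_imp_mod_0)
    hence "\<not> p ^ a * p dvd p ^ a * u m" using e by (simp add: mult.commute)
    thus "\<not> p dvd u m" using p by simp
  qed
  thus ?thesis by blast
qed

instance padic_int :: (prime_card) idom
proof
  fix a b :: "'a padic_int"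
  assume "a \<noteq> 0" "b \<noteq> 0"
  thus "a * b \<noteq> 0"
  proof transfer
    fix f g :: "nat \<Rightarrow> int"
    define p where "p = int CARD('a)"
    have p: "p > 0" unfolding p_def by (rule card_pos)
    have pr: "prime p" unfolding p_def using prime_card[where 'a='a] by simp
    assume f: "f \<in> padic_seqs (int CARD('a))" and g: "g \<in> padic_seqs (int CARD('a))"
      and fn: "f \<noteq> (\<lambda>_. 0)" and gn: "g \<noteq> (\<lambda>_. 0)"
    obtain a u where au: "\<forall>m\<ge>Suc a. f m = p ^ a * u m \<and> \<not> p dvd u m"
      using padic_seqs_val[OF f[folded p_def] p fn] by blast
    obtain b v where bv: "\<forall>m\<ge>Suc b. g m = p ^ b * v m \<and> \<not> p dvd v m"
      using padic_seqs_val[OF g[folded p_def] p gn] by blast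
    define N where "N = a + b + 1"
    have e: "f N * g N = p ^ (a + b) * (u N * v N)"
      using au bv unfolding N_def by (auto simp: power_add)
    have nd: "\<not> p dvd u N * v N" using au bv pr unfolding N_def
      by (simp add: prime_dvd_mult_iff)
    have "\<not> p ^ (a + b) * p dvd p ^ (a + b) * (u N * v N)" using nd p by simp
    hence "\<not> p ^ N dvd f N * g N" using e unfolding N_def by (simp add: mult.commute)
    hence "(f N * g N) mod p ^ N \<noteq> 0" by (simp add: dvd_eq_mod_eq_0)
    thus "(\<lambda>n. f n * g n mod int CARD('a) ^ n) \<noteq> (\<lambda>_. 0)"
      unfolding p_def by (metis)
  qed
qed

text \<open>\<open>'p padic_int\<close> is the ring Z_p of p-adic integers (p = CARD('p), a prime),
  realised as the inverse limit of the rings Z/p^n Z: a p-adic integer is the compatible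
  sequence of its residues modulo p^n.\<close>

type_synonym 'p padic = "'p padic_int fract"

definition padic_integer :: "'p::prime_card padic_int \<Rightarrow> 'p padic" where
  "padic_integer z = Fract z 1"

text \<open>The closed ball a + p^n Z_p; these balls (n a natural number, a in Q_p)
  form a neighbourhood basis of the p-adic topology on Q_p.\<close>
definition padic_ball :: "'p::prime_card padic \<Rightarrow> nat \<Rightarrow> 'p padic set" where
  "padic_ball a n = {x. \<exists>z. x - a = of_nat (CARD('p)) ^ n * padic_integer z}"

definition padic_dense :: "'p::prime_card padic set \<Rightarrow> bool" where
  "padic_dense S \<longleftrightarrow> (\<forall>a n. S \<inter> padic_ball a n \<noteq> {})"

text \<open>A polynomial is a finitely supported map from monomials (finitely supported
  exponent vectors \<open>nat \<Rightarrow>\<^sub>0 nat\<close>) to coefficients; ring structure from Poly_Mapping.\<close>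

type_synonym 'a mpoly = "(nat \<Rightarrow>\<^sub>0 nat) \<Rightarrow>\<^sub>0 'a"

definition in_vars :: "nat \<Rightarrow> 'a::zero mpoly \<Rightarrow> bool" where
  "in_vars r P \<longleftrightarrow> (\<forall>m \<in> Poly_Mapping.keys P. Poly_Mapping.keys m \<subseteq> {0..r})"

definition homogeneous :: "nat \<Rightarrow> 'a::zero mpoly \<Rightarrow> bool" where
  "homogeneous d P \<longleftrightarrow> (\<forall>m \<in> Poly_Mapping.keys P. (\<Sum>i\<in>Poly_Mapping.keys m. Poly_Mapping.lookup m i) = d)"

definition integral_form :: "nat \<Rightarrow> int mpoly \<Rightarrow> bool" where
  "integral_form r F \<longleftrightarrow> in_vars r F \<and> (\<exists>d. homogeneous d F)"

definition linear_form :: "nat \<Rightarrow> 'a::zero mpoly \<Rightarrow> bool" where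
  "linear_form r L \<longleftrightarrow> in_vars r L \<and> homogeneous 1 L"

definition dvd_in :: "nat \<Rightarrow> 'a::comm_semiring_1 mpoly \<Rightarrow> 'a mpoly \<Rightarrow> bool" where
  "dvd_in r A B \<longleftrightarrow> in_vars r A \<and> in_vars r B \<and> (\<exists>C. in_vars r C \<and> B = A * C)"

definition mpoly_eval :: "'a::comm_semiring_1 mpoly \<Rightarrow> (nat \<Rightarrow> 'a) \<Rightarrow> 'a" where
  "mpoly_eval P x = (\<Sum>m\<in>Poly_Mapping.keys P. Poly_Mapping.lookup P m * (\<Prod>i\<in>Poly_Mapping.keys m. x i ^ Poly_Mapping.lookup m i))"

definition ratio_set :: "nat \<Rightarrow> int mpoly \<Rightarrow> 'p::prime_card padic set" where
  "ratio_set r F = {of_int (mpoly_eval F x) / of_int (mpoly_eval F y) | x y.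
      (\<forall>i>r. x i = 0) \<and> (\<forall>i>r. y i = 0) \<and> mpoly_eval F y \<noteq> 0}"

end

theory Submission
  imports Defs "HOL-Computational_Algebra.Polynomial" "HOL-Number_Theory.Cong"
begin

definition mmono :: "(nat \<Rightarrow> 'b::comm_semiring_1) \<Rightarrow> (nat \<Rightarrow>\<^sub>0 nat) \<Rightarrow> 'b" where
  "mmono \<sigma> m = (\<Prod>i\<in>Poly_Mapping.keys m. \<sigma> i ^ Poly_Mapping.lookup m i)"

definition meval :: "('a::zero \<Rightarrow> 'b::comm_semiring_1) \<Rightarrow> (nat \<Rightarrow> 'b) \<Rightarrow> 'a mpoly \<Rightarrow> 'b" where
  "meval \<phi> \<sigma> P = (\<Sum>m\<in>Poly_Mapping.keys P. \<phi> (Poly_Mapping.lookup P m) * mmono \<sigma> m)"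

definition is_hom :: "('a::comm_semiring_1 \<Rightarrow> 'b::comm_semiring_1) \<Rightarrow> bool" where
  "is_hom \<phi> \<longleftrightarrow> \<phi> 0 = 0 \<and> \<phi> 1 = 1 \<and> (\<forall>a b. \<phi> (a + b) = \<phi> a + \<phi> b) \<and> (\<forall>a b. \<phi> (a * b) = \<phi> a * \<phi> b)"

lemma mpoly_eval_meval: "mpoly_eval P x = meval id x P"
  by (simp add: mpoly_eval_def meval_def mmono_def)

lemma pm_expand: "(P::'a \<Rightarrow>\<^sub>0 'b::comm_monoid_add) = (\<Sum>m\<in>Poly_Mapping.keys P. Poly_Mapping.single m (Poly_Mapping.lookup P m))"
proof (rule poly_mapping_eqI)
  fix k
  show "Poly_Mapping.lookup P k = Poly_Mapping.lookup (\<Sum>m\<in>Poly_Mapping.keys P. Poly_Mapping.single m (Poly_Mapping.lookup P m)) k"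
    by (auto simp: lookup_sum lookup_single when_def in_keys_iff sum.delta)
qed

lemma mmono_superset: "finite S \<Longrightarrow> Poly_Mapping.keys m \<subseteq> S \<Longrightarrow> mmono \<sigma> m = (\<Prod>i\<in>S. \<sigma> i ^ Poly_Mapping.lookup m i)"
  unfolding mmono_def by (rule prod.mono_neutral_left) (auto simp: in_keys_iff)

lemma mmono_add: "mmono \<sigma> (m + n) = mmono \<sigma> m * mmono \<sigma> n"
proof -
  let ?S = "Poly_Mapping.keys m \<union> Poly_Mapping.keys n"
  have "mmono \<sigma> (m+n) = (\<Prod>i\<in>?S. \<sigma> i ^ Poly_Mapping.lookup (m+n) i)"
    using keys_add[of m n] by (intro mmono_superset) auto
  also have "\<dots> = (\<Prod>i\<in>?S. \<sigma> i ^ Poly_Mapping.lookup m i * \<sigma> i ^ Poly_Mapping.lookup n i)"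
    by (simp add: lookup_add power_add)
  also have "\<dots> = (\<Prod>i\<in>?S. \<sigma> i ^ Poly_Mapping.lookup m i) * (\<Prod>i\<in>?S. \<sigma> i ^ Poly_Mapping.lookup n i)"
    by (rule prod.distrib)
  also have "\<dots> = mmono \<sigma> m * mmono \<sigma> n"
    using mmono_superset[of ?S m \<sigma>] mmono_superset[of ?S n \<sigma>] by simp
  finally show ?thesis .
qed

lemma mmono_zero[simp]: "mmono \<sigma> 0 = 1" by (simp add: mmono_def)

lemma mmono_single[simp]: "mmono \<sigma> (Poly_Mapping.single i k) = \<sigma> i ^ k"
  by (simp add: mmono_def)

lemma mmono_cong: "(\<And>i. i \<in> Poly_Mapping.keys m \<Longrightarrow> \<sigma> i = \<tau> i) \<Longrightarrow> mmono \<sigma> m = mmono \<tau> m"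
  unfolding mmono_def by (rule prod.cong) auto

lemma meval_superset:
  assumes "\<phi> 0 = 0" "finite S" "Poly_Mapping.keys P \<subseteq> S"
  shows "meval \<phi> \<sigma> P = (\<Sum>m\<in>S. \<phi> (Poly_Mapping.lookup P m) * mmono \<sigma> m)"
  unfolding meval_def using assms by (intro sum.mono_neutral_left) (auto simp: in_keys_iff)

lemma meval_add:
  assumes "is_hom \<phi>"
  shows "meval \<phi> \<sigma> (P + Q) = meval \<phi> \<sigma> P + meval \<phi> \<sigma> Q"
proof -
  have h: "\<phi> 0 = 0" "\<And>a b. \<phi> (a+b) = \<phi> a + \<phi> b" using assms by (auto simp: is_hom_def)
  let ?S = "Poly_Mapping.keys P \<union> Poly_Mapping.keys Q"
  have "meval \<phi> \<sigma> (P + Q) = (\<Sum>m\<in>?S. \<phi> (Poly_Mapping.lookup (P+Q) m) * mmono \<sigma> m)"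
    using keys_add[of P Q] h by (intro meval_superset) auto
  also have "\<dots> = (\<Sum>m\<in>?S. \<phi> (Poly_Mapping.lookup P m) * mmono \<sigma> m) + (\<Sum>m\<in>?S. \<phi> (Poly_Mapping.lookup Q m) * mmono \<sigma> m)"
    by (simp add: lookup_add h distrib_right sum.distrib)
  also have "\<dots> = meval \<phi> \<sigma> P + meval \<phi> \<sigma> Q"
    using h meval_superset[of \<phi> ?S P \<sigma>] meval_superset[of \<phi> ?S Q \<sigma>] by simp
  finally show ?thesis .
qed

lemma meval_zero[simp]: "meval \<phi> \<sigma> 0 = 0" by (simp add: meval_def)

lemma meval_single:
  assumes "\<phi> 0 = 0"
  shows "meval \<phi> \<sigma> (Poly_Mapping.single m a) = \<phi> a * mmono \<sigma> m"
  using assms by (auto simp: meval_def)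

lemma meval_sum:
  assumes "is_hom \<phi>"
  shows "meval \<phi> \<sigma> (\<Sum>k\<in>A. f k) = (\<Sum>k\<in>A. meval \<phi> \<sigma> (f k))"
  by (induction A rule: infinite_finite_induct) (auto simp: meval_add[OF assms])

lemma meval_mult:
  assumes "is_hom \<phi>"
  shows "meval \<phi> \<sigma> (P * Q) = meval \<phi> \<sigma> P * meval \<phi> \<sigma> Q"
proof -
  have h: "\<phi> 0 = 0" "\<And>a b. \<phi> (a*b) = \<phi> a * \<phi> b" using assms by (auto simp: is_hom_def)
  have "P * Q = (\<Sum>m\<in>Poly_Mapping.keys P. Poly_Mapping.single m (Poly_Mapping.lookup P m)) *
     (\<Sum>n\<in>Poly_Mapping.keys Q. Poly_Mapping.single n (Poly_Mapping.lookup Q n))"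
    by (subst pm_expand[of P], subst pm_expand[of Q], rule refl)
  also have "\<dots> = (\<Sum>m\<in>Poly_Mapping.keys P. \<Sum>n\<in>Poly_Mapping.keys Q.
      Poly_Mapping.single (m + n) (Poly_Mapping.lookup P m * Poly_Mapping.lookup Q n))"
    by (simp add: sum_product mult_single)
  finally have "meval \<phi> \<sigma> (P * Q) = (\<Sum>m\<in>Poly_Mapping.keys P. \<Sum>n\<in>Poly_Mapping.keys Q.
      \<phi> (Poly_Mapping.lookup P m) * mmono \<sigma> m * (\<phi> (Poly_Mapping.lookup Q n) * mmono \<sigma> n))"
    by (simp add: meval_sum[OF assms] meval_single h mmono_add mult_ac)
  also have "\<dots> = meval \<phi> \<sigma> P * meval \<phi> \<sigma> Q"
    by (simp add: meval_def sum_product)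
  finally show ?thesis .
qed

lemma meval_one:
  assumes "is_hom \<phi>"
  shows "meval \<phi> \<sigma> 1 = 1"
proof -
  have "meval \<phi> \<sigma> (1::'a mpoly) = meval \<phi> \<sigma> (Poly_Mapping.single 0 1)" by simp
  also have "\<dots> = 1" using assms by (simp only: meval_single is_hom_def mmono_zero) simp
  finally show ?thesis .
qed

lemma meval_uminus:
  fixes \<phi> :: "'a::comm_ring_1 \<Rightarrow> 'b::comm_ring_1"
  assumes "is_hom \<phi>"
  shows "meval \<phi> \<sigma> (- P) = - meval \<phi> \<sigma> P"
proof -
  have "meval \<phi> \<sigma> (- P) + meval \<phi> \<sigma> P = 0"
    by (simp add: meval_add[OF assms, symmetric])
  then show ?thesis by (simp add: eq_neg_iff_add_eq_0)
qed

lemma meval_diff: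
  fixes \<phi> :: "'a::comm_ring_1 \<Rightarrow> 'b::comm_ring_1"
  assumes "is_hom \<phi>"
  shows "meval \<phi> \<sigma> (P - Q) = meval \<phi> \<sigma> P - meval \<phi> \<sigma> Q"
  using meval_add[OF assms, of \<sigma> P "-Q"] meval_uminus[OF assms, of \<sigma> Q] by simp

lemma meval_power:
  assumes "is_hom \<phi>"
  shows "meval \<phi> \<sigma> (P ^ n) = meval \<phi> \<sigma> P ^ n"
  by (induction n) (auto simp: meval_mult[OF assms] meval_one[OF assms])

lemma meval_prod:
  assumes "is_hom \<phi>"
  shows "meval \<phi> \<sigma> (\<Prod>k\<in>A. f k) = (\<Prod>k\<in>A. meval \<phi> \<sigma> (f k))"
  by (induction A rule: infinite_finite_induct) (auto simp: meval_mult[OF assms] meval_one[OF assms])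

definition Var :: "nat \<Rightarrow> 'a::comm_semiring_1 mpoly" where
  "Var i = Poly_Mapping.single (Poly_Mapping.single i 1) 1"

definition Const :: "'a::comm_semiring_1 \<Rightarrow> 'a mpoly" where
  "Const c = Poly_Mapping.single 0 c"

lemma meval_Var: "is_hom \<phi> \<Longrightarrow> meval \<phi> \<sigma> (Var i) = \<sigma> i"
  by (simp add: Var_def meval_single is_hom_def)

lemma meval_Const: "is_hom \<phi> \<Longrightarrow> meval \<phi> \<sigma> (Const c) = \<phi> c"
  by (simp add: Const_def meval_single is_hom_def)

lemma is_hom_id: "is_hom id" by (simp add: is_hom_def)

lemma is_hom_Const: "is_hom (Const :: 'a::comm_semiring_1 \<Rightarrow> _)"
  by (simp add: is_hom_def Const_def single_add mult_single)

lemma is_hom_pC: "is_hom (\<lambda>c::'a::comm_semiring_1. [:c:])"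
  by (simp add: is_hom_def one_pCons mult.commute)

lemma meval_cong:
  assumes "\<And>m i. m \<in> Poly_Mapping.keys P \<Longrightarrow> i \<in> Poly_Mapping.keys m \<Longrightarrow> \<sigma> i = \<tau> i"
  shows "meval \<phi> \<sigma> P = meval \<phi> \<tau> P"
  unfolding meval_def using assms by (intro sum.cong refl arg_cong2[where f="(*)"] mmono_cong) auto

lemma Var_power: "(Var i :: 'a::comm_semiring_1 mpoly) ^ n = Poly_Mapping.single (Poly_Mapping.single i n) 1"
  by (induction n) (auto simp: Var_def mult_single single_add[symmetric] add.commute)

lemma prod_single1: "(\<Prod>i\<in>A. Poly_Mapping.single (f i) (1::'a::comm_semiring_1)) = Poly_Mapping.single (\<Sum>i\<in>A. f i) 1"
  by (induction A rule: infinite_finite_induct) (auto simp: mult_single)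

lemma mmono_Var: "mmono Var m = (Poly_Mapping.single m 1 :: 'a::comm_semiring_1 mpoly)"
proof -
  have "mmono Var m = (\<Prod>i\<in>Poly_Mapping.keys m. Poly_Mapping.single (Poly_Mapping.single i (Poly_Mapping.lookup m i)) (1::'a))"
    by (simp add: mmono_def Var_power)
  also have "\<dots> = Poly_Mapping.single m 1"
    by (simp add: prod_single1 pm_expand[of m, symmetric])
  finally show ?thesis .
qed

lemma meval_Var_id: "meval Const Var P = (P :: 'a::comm_semiring_1 mpoly)"
proof -
  have "meval Const Var P = (\<Sum>m\<in>Poly_Mapping.keys P. Poly_Mapping.single m (Poly_Mapping.lookup P m))"
    unfolding meval_def by (simp add: mmono_Var Const_def mult_single)
  also have "\<dots> = P" by (rule pm_expand[symmetric])
  finally show ?thesis .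
qed

lemma meval_Var_agree:
  assumes "in_vars r P" "\<And>i. i \<le> r \<Longrightarrow> \<sigma> i = Var i"
  shows "meval Const \<sigma> P = (P :: 'a::comm_semiring_1 mpoly)"
proof -
  have "meval Const \<sigma> P = meval Const Var P"
    using assms by (intro meval_cong) (metis atLeastAtMost_iff in_vars_def subsetD)
  then show ?thesis by (simp add: meval_Var_id)
qed


lemma keys_add_nat: "Poly_Mapping.keys (a + b) \<subseteq> Poly_Mapping.keys a \<union> Poly_Mapping.keys (b::nat \<Rightarrow>\<^sub>0 nat)"
  by (rule keys_add)

lemma in_vars_zero[simp]: "in_vars r 0" by (simp add: in_vars_def)
lemma in_vars_one[simp]: "in_vars r (1 :: 'a::comm_semiring_1 mpoly)" by (simp add: in_vars_def)

lemma in_vars_add: "in_vars r P \<Longrightarrow> in_vars r Q \<Longrightarrow> in_vars r (P + Q)"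
  unfolding in_vars_def using keys_add[of P Q] by blast

lemma in_vars_uminus: "in_vars r P \<Longrightarrow> in_vars r (- (P::'a::comm_ring_1 mpoly))"
  unfolding in_vars_def by (simp add: keys_minus)

lemma in_vars_diff: "in_vars r P \<Longrightarrow> in_vars r Q \<Longrightarrow> in_vars r (P - (Q::'a::comm_ring_1 mpoly))"
  using in_vars_add[of r P "-Q"] in_vars_uminus[of r Q] by simp

lemma in_vars_mult: "in_vars r P \<Longrightarrow> in_vars r Q \<Longrightarrow> in_vars r (P * (Q::'a::comm_semiring_1 mpoly))"
proof -
  assume a: "in_vars r P" "in_vars r Q"
  show ?thesis unfolding in_vars_def
  proof
    fix m assume "m \<in> Poly_Mapping.keys (P * Q)"
    then obtain a b where "m = a + b" "a \<in> Poly_Mapping.keys P" "b \<in> Poly_Mapping.keys Q"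
      using keys_mult[of P Q] by blast
    then show "Poly_Mapping.keys m \<subseteq> {0..r}" using a keys_add_nat[of a b] unfolding in_vars_def by blast
  qed
qed

lemma in_vars_sum: "(\<And>k. k \<in> A \<Longrightarrow> in_vars r (f k)) \<Longrightarrow> in_vars r (\<Sum>k\<in>A. f k)"
  by (induction A rule: infinite_finite_induct) (auto intro: in_vars_add)

lemma in_vars_prod: "(\<And>k. k \<in> A \<Longrightarrow> in_vars r (f k)) \<Longrightarrow> in_vars r (\<Prod>k\<in>A. (f k :: 'a::comm_semiring_1 mpoly))"
  by (induction A rule: infinite_finite_induct) (auto intro: in_vars_mult)

lemma in_vars_power: "in_vars r P \<Longrightarrow> in_vars r (P ^ n :: 'a::comm_semiring_1 mpoly)"
  by (induction n) (auto intro: in_vars_mult)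

lemma in_vars_Const: "in_vars r (Const c)" by (simp add: in_vars_def Const_def)

lemma in_vars_Var: "i \<le> r \<Longrightarrow> in_vars r (Var i)" by (simp add: in_vars_def Var_def)

lemma in_vars_meval:
  assumes "\<And>i. in_vars r (\<sigma> i)"
  shows "in_vars r (meval Const \<sigma> (P :: 'a::comm_semiring_1 mpoly))"
  unfolding meval_def mmono_def
  by (intro in_vars_sum in_vars_mult in_vars_Const in_vars_prod in_vars_power assms)

subsection \<open>Polynomials vanishing on integer points\<close>

lemma poly_meval: "poly (meval (\<lambda>c. [:c:]) \<sigma> P) t = meval id (\<lambda>i. poly (\<sigma> i) t) P"
  by (simp add: meval_def mmono_def poly_sum poly_prod)

lemma digits_bound:
  fixes D :: nat
  assumes "\<forall>i<n. f i < D"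
  shows "(\<Sum>i<n. f i * D ^ i) < D ^ n"
  using assms
proof (induction n)
  case 0 then show ?case by simp
next
  case (Suc n)
  have "(\<Sum>i<Suc n. f i * D ^ i) = (\<Sum>i<n. f i * D ^ i) + f n * D ^ n" by simp
  also have "\<dots> < D ^ n + f n * D ^ n" using Suc by simp
  also have "\<dots> = (f n + 1) * D ^ n" by simp
  also have "\<dots> \<le> D * D ^ n" using Suc.prems by (intro mult_right_mono) auto
  finally show ?case by simp
qed

lemma digits_inj:
  fixes D :: nat
  assumes "\<forall>i<n. f i < D" "\<forall>i<n. g i < D" "(\<Sum>i<n. f i * D ^ i) = (\<Sum>i<n. g i * D ^ i)"
  shows "\<forall>i<n. f i = g i"
  using assms
proof (induction n)
  case 0 then show ?case by simp
next
  case (Suc n)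
  define A where "A = (\<Sum>i<n. f i * D ^ i)"
  define B where "B = (\<Sum>i<n. g i * D ^ i)"
  have A: "A < D ^ n" unfolding A_def using Suc.prems by (intro digits_bound) auto
  have B: "B < D ^ n" unfolding B_def using Suc.prems by (intro digits_bound) auto
  have e: "A + f n * D ^ n = B + g n * D ^ n" using Suc.prems(3) by (simp add: A_def B_def)
  have Dn: "D ^ n > 0" by (rule le_less_trans[OF le0 A])
  have "(A + f n * D ^ n) mod D ^ n = A" using A by simp
  moreover have "(B + g n * D ^ n) mod D ^ n = B" using B by simp
  ultimately have AB: "A = B" using e by simp
  have "f n * D ^ n = g n * D ^ n" using e AB by simp
  then have "f n = g n" using Dn by (simp; auto)
  moreover have "\<forall>i<n. f i = g i" using Suc AB by (auto simp: A_def B_def)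
  ultimately show ?case using less_Suc_eq by auto
qed

lemma pm_eq_digits:
  fixes D :: nat
  assumes "Poly_Mapping.keys m \<subseteq> {..<n}" "Poly_Mapping.keys m' \<subseteq> {..<n}"
    "\<forall>i<n. Poly_Mapping.lookup m i < D" "\<forall>i<n. Poly_Mapping.lookup m' i < D"
    "(\<Sum>i<n. Poly_Mapping.lookup m i * D ^ i) = (\<Sum>i<n. Poly_Mapping.lookup m' i * D ^ i)"
  shows "m = m'"
proof (rule poly_mapping_eqI)
  fix i
  show "Poly_Mapping.lookup m i = Poly_Mapping.lookup m' i"
  proof (cases "i < n")
    case True then show ?thesis using digits_inj[OF assms(3,4,5)] by blast
  next
    case False
    then have "i \<notin> Poly_Mapping.keys m" "i \<notin> Poly_Mapping.keys m'" using assms(1,2) by auto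
    then show ?thesis by (simp add: in_keys_iff)
  qed
qed

lemma prod_monom1: "(\<Prod>i\<in>A. monom (1::'a::comm_semiring_1) (f i)) = monom 1 (\<Sum>i\<in>A. f i)"
  by (induction A rule: infinite_finite_induct) (auto simp: mult_monom monom_0 one_pCons)

lemma mpoly_zero_on_ints:
  fixes P :: "'a::idom mpoly"
  assumes inj: "inj (of_int :: int \<Rightarrow> 'a)" and vars: "in_vars r P"
    and van: "\<And>x. (\<forall>i. x i \<in> range of_int) \<Longrightarrow> (\<forall>i>r. x i = 0) \<Longrightarrow> mpoly_eval P x = 0"
  shows "P = 0"
proof (rule ccontr)
  assume nz: "P \<noteq> 0"
  define D where "D = Suc (\<Sum>m\<in>Poly_Mapping.keys P. \<Sum>i\<in>Poly_Mapping.keys m. Poly_Mapping.lookup m i)"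
  have Dlt: "Poly_Mapping.lookup m i < D" if "m \<in> Poly_Mapping.keys P" for m i
  proof (cases "i \<in> Poly_Mapping.keys m")
    case True
    have "Poly_Mapping.lookup m i \<le> (\<Sum>i\<in>Poly_Mapping.keys m. Poly_Mapping.lookup m i)"
      using True by (rule member_le_sum) auto
    also have "\<dots> \<le> (\<Sum>m\<in>Poly_Mapping.keys P. \<Sum>i\<in>Poly_Mapping.keys m. Poly_Mapping.lookup m i)"
      using that by (rule member_le_sum) auto
    finally show ?thesis unfolding D_def by simp
  next
    case False then show ?thesis by (simp add: D_def in_keys_iff)
  qed
  define e where "e m = (\<Sum>i<Suc r. Poly_Mapping.lookup m i * D ^ i)" for m
  have keysr: "Poly_Mapping.keys m \<subseteq> {..<Suc r}" if "m \<in> Poly_Mapping.keys P" for m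
  proof
    fix i assume "i \<in> Poly_Mapping.keys m"
    then have "i \<in> {0..r}" using vars that unfolding in_vars_def by blast
    then show "i \<in> {..<Suc r}" by simp
  qed
  have einj: "m = m'" if "m \<in> Poly_Mapping.keys P" "m' \<in> Poly_Mapping.keys P" "e m = e m'" for m m'
  proof (rule pm_eq_digits[of m "Suc r" m' D])
    show "Poly_Mapping.keys m \<subseteq> {..<Suc r}" by (rule keysr[OF that(1)])
    show "Poly_Mapping.keys m' \<subseteq> {..<Suc r}" by (rule keysr[OF that(2)])
    show "\<forall>i<Suc r. Poly_Mapping.lookup m i < D" using Dlt[OF that(1)] by blast
    show "\<forall>i<Suc r. Poly_Mapping.lookup m' i < D" using Dlt[OF that(2)] by blast
    show "(\<Sum>i<Suc r. Poly_Mapping.lookup m i * D ^ i) = (\<Sum>i<Suc r. Poly_Mapping.lookup m' i * D ^ i)"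
      using that(3) by (simp only: e_def)
  qed
  define \<sigma> where "\<sigma> i = (if i \<le> r then monom (1::'a) (D ^ i) else 0)" for i
  define U where "U = meval (\<lambda>c. [:c:]) \<sigma> P"
  have mono_e: "mmono \<sigma> m = monom 1 (e m)" if "m \<in> Poly_Mapping.keys P" for m
  proof -
    have "mmono \<sigma> m = (\<Prod>i<Suc r. \<sigma> i ^ Poly_Mapping.lookup m i)"
      using keysr[OF that] by (intro mmono_superset) auto
    also have "\<dots> = (\<Prod>i<Suc r. monom 1 (Poly_Mapping.lookup m i * D ^ i))"
      by (intro prod.cong refl) (auto simp: \<sigma>_def monom_power mult.commute)
    also have "\<dots> = monom 1 (e m)" by (simp add: prod_monom1 e_def)
    finally show ?thesis .
  qed
  have U: "U = (\<Sum>m\<in>Poly_Mapping.keys P. monom (Poly_Mapping.lookup P m) (e m))"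
    unfolding U_def meval_def
    by (intro sum.cong refl) (simp add: mono_e monom_0[symmetric] mult_monom)
  have "\<exists>m. Poly_Mapping.lookup P m \<noteq> 0"
  proof (rule ccontr)
    assume "\<not> ?thesis"
    then have "P = 0" by (intro poly_mapping_eqI) auto
    then show False using nz by simp
  qed
  then obtain m0 where m0: "m0 \<in> Poly_Mapping.keys P" by (auto simp: in_keys_iff)
  have "coeff U (e m0) = (\<Sum>m\<in>Poly_Mapping.keys P. if m = m0 then Poly_Mapping.lookup P m else 0)"
    unfolding U coeff_sum by (intro sum.cong refl) (auto dest: einj[OF _ m0])
  also have "\<dots> = Poly_Mapping.lookup P m0" using m0 by simp
  finally have "coeff U (e m0) \<noteq> 0" using m0 by (simp add: in_keys_iff)
  then have Unz: "U \<noteq> 0" by auto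
  have "infinite (range (of_int :: int \<Rightarrow> 'a))" using inj finite_imageD[of "of_int :: int \<Rightarrow> 'a" UNIV] by auto
  moreover have "finite {x. poly U x = 0}" using poly_roots_finite[OF Unz] .
  ultimately have "\<not> range (of_int :: int \<Rightarrow> 'a) \<subseteq> {x. poly U x = 0}"
    using finite_subset by blast
  then obtain t where t: "t \<in> range (of_int :: int \<Rightarrow> 'a)" "poly U t \<noteq> 0" by blast
  then obtain k where k: "t = of_int k" by auto
  have "poly U t = mpoly_eval P (\<lambda>i. poly (\<sigma> i) t)"
    unfolding U_def poly_meval mpoly_eval_meval ..
  also have "\<dots> = 0"
  proof (rule van)
    show "\<forall>i. poly (\<sigma> i) t \<in> range of_int"
    proof
      fix i
      have "poly (\<sigma> i) t = of_int (if i \<le> r then k ^ (D ^ i) else 0)"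
        by (simp add: \<sigma>_def poly_monom k)
      then show "poly (\<sigma> i) t \<in> range of_int" by blast
    qed
    show "\<forall>i>r. poly (\<sigma> i) t = 0" by (simp add: \<sigma>_def)
  qed
  finally show False using t by simp
qed

section \<open>Digits of p-adic integers\<close>

lemma pd_seq: "padic_digits (z :: 'p::prime_card padic_int) \<in> padic_seqs (int CARD('p))"
  using padic_digits by blast

lemma pd_ge0: "0 \<le> padic_digits (z :: 'p::prime_card padic_int) n"
  using pd_seq[of z] unfolding padic_seqs_def by blast

lemma pd_lt: "padic_digits (z :: 'p::prime_card padic_int) n < int CARD('p) ^ n"
  using pd_seq[of z] unfolding padic_seqs_def by blast

lemma pd_0: "padic_digits (z :: 'p::prime_card padic_int) 0 = 0"
  using pd_ge0[of z 0] pd_lt[of z 0] by simp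

lemma pd_mod_le: "m \<le> n \<Longrightarrow> padic_digits (z :: 'p::prime_card padic_int) n mod int CARD('p) ^ m = padic_digits z m"
  using padic_seqs_mod_le[OF pd_seq card_pos] by blast

lemma pd_eqI: "(\<And>n. padic_digits (z :: 'p::prime_card padic_int) n = padic_digits w n) \<Longrightarrow> z = w"
  by (metis ext padic_digits_inject)

lemma pd_add: "padic_digits (z + w :: 'p::prime_card padic_int) n = (padic_digits z n + padic_digits w n) mod int CARD('p) ^ n"
  by (simp add: plus_padic_int.rep_eq)

lemma pd_mult: "padic_digits (z * w :: 'p::prime_card padic_int) n = (padic_digits z n * padic_digits w n) mod int CARD('p) ^ n"
  by (simp add: times_padic_int.rep_eq)

lemma pd_uminus: "padic_digits (- z :: 'p::prime_card padic_int) n = (- padic_digits z n) mod int CARD('p) ^ n"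
  by (simp add: uminus_padic_int.rep_eq)

lemma pd_zero: "padic_digits (0 :: 'p::prime_card padic_int) n = 0"
  by (simp add: zero_padic_int.rep_eq)

lemma pd_one: "padic_digits (1 :: 'p::prime_card padic_int) n = 1 mod int CARD('p) ^ n"
  by (simp add: one_padic_int.rep_eq)

lemma pd_diff: "padic_digits (z - w :: 'p::prime_card padic_int) n = (padic_digits z n - padic_digits w n) mod int CARD('p) ^ n"
  unfolding minus_padic_int_def pd_add pd_uminus by (simp only: mod_add_right_eq diff_conv_add_uminus)

lemma pd_of_nat: "padic_digits (of_nat k :: 'p::prime_card padic_int) n = int k mod int CARD('p) ^ n"
proof (induction k)
  case 0 then show ?case by (simp add: pd_zero)
next
  case (Suc k)
  have "padic_digits (of_nat (Suc k) :: 'p padic_int) n = padic_digits (1 + of_nat k :: 'p padic_int) n" by simp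
  also have "\<dots> = (1 mod int CARD('p) ^ n + int k mod int CARD('p) ^ n) mod int CARD('p) ^ n"
    by (simp only: pd_add pd_one Suc.IH)
  also have "\<dots> = (1 + int k) mod int CARD('p) ^ n" by (simp only: mod_add_eq)
  finally show ?case by (simp only: of_nat_Suc add.commute)
qed

lemma pd_of_int: "padic_digits (of_int k :: 'p::prime_card padic_int) n = k mod int CARD('p) ^ n"
proof (cases "k \<ge> 0")
  case True
  then obtain m where m: "k = int m" using nonneg_int_cases by blast
  have "(of_int k :: 'p padic_int) = of_nat m" unfolding m by simp
  then show ?thesis by (simp add: pd_of_nat m)
next
  case False
  then obtain m where m: "k = - int m" by (intro that[of "nat (- k)"]) simp
  have "(of_int k :: 'p padic_int) = - of_nat m" unfolding m by simp
  then show ?thesis by (simp only: pd_of_nat pd_uminus mod_minus_eq m)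
qed

lemma p_gt1: "int CARD('p::prime_card) > 1" by (rule prime_card_gt1)

lemma p_prime: "prime (int CARD('p::prime_card))"
  using prime_card[where 'a='p] by simp

lemma div_lt_of_lt_mult:
  fixes a b c :: int
  assumes "a < b * c" "c > 0"
  shows "a div c < b"
proof -
  have "a mod c \<ge> 0" using assms(2) by simp
  moreover have "c * (a div c) + a mod c = a" by (rule mult_div_mod_eq)
  ultimately have "c * (a div c) \<le> a" by linarith
  then have "c * (a div c) < c * b" using assms(1) by (simp add: mult.commute)
  then show ?thesis using assms(2) by simp
qed

lemma pd_divisible:
  fixes z :: "'p::prime_card padic_int"
  assumes z: "padic_digits z n = 0"
  shows "\<exists>w. z = of_int (int CARD('p) ^ n) * w"
proof -
  define p where "p = int CARD('p)"
  have p0: "p > 0" unfolding p_def using card_pos by blast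
  have dvd: "p ^ n dvd padic_digits z (m + n)" for m
  proof -
    have "padic_digits z (m + n) mod p ^ n = 0" unfolding p_def using pd_mod_le[of n "m+n" z] z by simp
    then show ?thesis by (simp add: dvd_eq_mod_eq_0)
  qed
  define f where "f m = padic_digits z (m + n) div p ^ n" for m
  have fm: "p ^ n * f m = padic_digits z (m + n)" for m
    unfolding f_def using dvd[of m] by simp
  have fs: "f \<in> padic_seqs p"
    unfolding padic_seqs_def
  proof (intro CollectI allI conjI)
    fix m
    show "0 \<le> f m" unfolding f_def using pd_ge0[of z] p0 by (simp add: pos_imp_zdiv_nonneg_iff)
    have "padic_digits z (m + n) < p ^ m * p ^ n" using pd_lt[of z "m+n"] by (simp add: p_def power_add)
    then show "f m < p ^ m" unfolding f_def using p0 by (intro div_lt_of_lt_mult) auto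
    have "p ^ n * f m = padic_digits z (Suc m + n) mod p ^ (m + n)"
      using fm[of m] pd_mod_le[of "m+n" "Suc m + n" z] by (simp add: p_def)
    also have "\<dots> = (p ^ n * f (Suc m)) mod (p ^ n * p ^ m)" by (simp only: fm power_add mult.commute)
    also have "\<dots> = p ^ n * (f (Suc m) mod p ^ m)" by (rule mod_mult_mult1)
    finally show "f (Suc m) mod p ^ m = f m" using p0 by simp
  qed
  define w :: "'p padic_int" where "w = Abs_padic_int f"
  have dw: "padic_digits w = f" unfolding w_def using fs by (simp add: Abs_padic_int_inverse p_def)
  have "z = of_int (p ^ n) * w"
  proof (rule pd_eqI)
    fix m
    have e1: "padic_digits (of_int (p ^ n) :: 'p padic_int) m = p ^ n mod p ^ m"
      unfolding p_def by (rule pd_of_int)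
    have "padic_digits (of_int (p ^ n) * w) m = ((p ^ n mod p ^ m) * f m) mod p ^ m"
      by (simp only: pd_mult e1 dw) (simp add: p_def)
    also have "\<dots> = (p ^ n * f m) mod p ^ m" by (simp add: mod_mult_left_eq)
    also have "\<dots> = padic_digits z (m + n) mod p ^ m" by (simp add: fm)
    also have "\<dots> = padic_digits z m" unfolding p_def by (rule pd_mod_le) simp
    finally show "padic_digits z m = padic_digits (of_int (p ^ n) * w) m" by simp
  qed
  then show ?thesis unfolding p_def by blast
qed

lemma inv_unique_mod:
  fixes a w w' M :: int
  assumes "0 \<le> w" "w < M" "0 \<le> w'" "w' < M" "[a * w = 1] (mod M)" "[a * w' = 1] (mod M)"
  shows "w = w'"
proof -
  have c1: "[w * (a * w') = w] (mod M)" using cong_scalar_left[OF assms(6), of w] by simp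
  have c2: "[w * (a * w') = w'] (mod M)" using cong_scalar_left[OF assms(5), of w'] by (simp add: mult_ac)
  have c: "[w * (a * w') = w] (mod M)" "[w * (a * w') = w'] (mod M)" using c1 c2 by auto
  have "[w = w'] (mod M)" using cong_trans[OF cong_sym[OF c(1)] c(2)] .
  then show ?thesis using assms(1-4) by (simp add: cong_def)
qed

lemma pd_unit:
  fixes z :: "'p::prime_card padic_int"
  assumes nd: "\<not> int CARD('p) dvd padic_digits z 1"
  shows "\<exists>w. z * w = 1"
proof -
  define p where "p = int CARD('p)"
  have p0: "p > 0" unfolding p_def using card_pos by blast
  have pr: "prime p" unfolding p_def by (rule p_prime)
  have cop: "coprime (padic_digits z n) (p ^ n)" for n
  proof (cases n)
    case 0 then show ?thesis by simp
  next
    case (Suc k)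
    have "padic_digits z n mod p = padic_digits z 1" using pd_mod_le[of 1 n z] Suc by (simp add: p_def)
    moreover have "p dvd padic_digits z n \<longleftrightarrow> p dvd padic_digits z n mod p" by (simp add: dvd_mod_iff)
    ultimately have "\<not> p dvd padic_digits z n" using nd unfolding p_def by simp
    then have "coprime p (padic_digits z n)" using pr by (rule prime_imp_coprime[rotated])
    then show ?thesis by (simp add: coprime_commute)
  qed
  define I where "I n = (SOME w. 0 \<le> w \<and> w < p ^ n \<and> [padic_digits z n * w = 1] (mod p ^ n))" for n
  have Iex: "\<exists>w. 0 \<le> w \<and> w < p ^ n \<and> [padic_digits z n * w = 1] (mod p ^ n)" for n
  proof -
    obtain x where x: "[padic_digits z n * x = 1] (mod p ^ n)" using cong_solve_coprime_int[OF cop[of n]] by blast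
    have "[padic_digits z n * (x mod p ^ n) = padic_digits z n * x] (mod p ^ n)"
      by (simp add: cong_def mod_mult_right_eq)
    then have "[padic_digits z n * (x mod p ^ n) = 1] (mod p ^ n)" using x by (rule cong_trans)
    moreover have "0 \<le> x mod p ^ n" "x mod p ^ n < p ^ n" using p0 by simp_all
    ultimately show ?thesis by blast
  qed
  have I: "0 \<le> I n \<and> I n < p ^ n \<and> [padic_digits z n * I n = 1] (mod p ^ n)" for n
    unfolding I_def by (rule someI_ex[OF Iex])
  have Is: "I \<in> padic_seqs p"
    unfolding padic_seqs_def
  proof (intro CollectI allI conjI)
    fix n
    show "0 \<le> I n" "I n < p ^ n" using I[of n] by auto
    have d: "p ^ n dvd p ^ Suc n" by (simp add: le_imp_power_dvd)
    have "[padic_digits z n * (I (Suc n) mod p ^ n) = padic_digits z (Suc n) * I (Suc n)] (mod p ^ n)"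
    proof -
      have "padic_digits z n = padic_digits z (Suc n) mod p ^ n" using pd_mod_le[of n "Suc n" z] by (simp add: p_def)
      then show ?thesis unfolding cong_def by (simp only: mod_mult_eq)
    qed
    moreover have "[padic_digits z (Suc n) * I (Suc n) = 1] (mod p ^ n)"
      using cong_dvd_modulus[OF _ d] I[of "Suc n"] by blast
    ultimately have "[padic_digits z n * (I (Suc n) mod p ^ n) = 1] (mod p ^ n)" by (rule cong_trans)
    then show "I (Suc n) mod p ^ n = I n"
      using I[of n] p0 by (intro inv_unique_mod[of _ "p ^ n" _ "padic_digits z n"]) auto
  qed
  define w :: "'p padic_int" where "w = Abs_padic_int I"
  have dw: "padic_digits w = I" unfolding w_def using Is by (simp add: Abs_padic_int_inverse p_def)
  have "z * w = 1"
  proof (rule pd_eqI)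
    fix n
    have "[padic_digits z n * I n = 1] (mod p ^ n)" using I[of n] by blast
    then have "(padic_digits z n * I n) mod p ^ n = 1 mod p ^ n" by (simp only: cong_def)
    then show "padic_digits (z * w) n = padic_digits (1 :: 'p padic_int) n"
      by (simp only: pd_mult pd_one dw p_def)
  qed
  then show ?thesis by blast
qed

section \<open>The embedding of Z_p into Q_p\<close>

lemma pi_add[simp]: "padic_integer (a + b) = padic_integer a + padic_integer (b :: 'p::prime_card padic_int)"
  by (simp add: padic_integer_def)

lemma pi_mult[simp]: "padic_integer (a * b) = padic_integer a * padic_integer (b :: 'p::prime_card padic_int)"
  by (simp add: padic_integer_def)

lemma pi_uminus[simp]: "padic_integer (- a) = - padic_integer (a :: 'p::prime_card padic_int)"
  by (simp add: padic_integer_def)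

lemma pi_diff[simp]: "padic_integer (a - b) = padic_integer a - padic_integer (b :: 'p::prime_card padic_int)"
  by (simp add: padic_integer_def)

lemma pi_zero[simp]: "padic_integer (0 :: 'p::prime_card padic_int) = 0"
  by (simp add: padic_integer_def fract_collapse)

lemma pi_one[simp]: "padic_integer (1 :: 'p::prime_card padic_int) = 1"
  by (simp add: padic_integer_def fract_collapse)

lemma pi_of_nat[simp]: "padic_integer (of_nat k :: 'p::prime_card padic_int) = of_nat k"
  by (simp add: padic_integer_def of_nat_fract)

lemma pi_of_int[simp]: "padic_integer (of_int k :: 'p::prime_card padic_int) = of_int k"
proof (cases "k \<ge> 0")
  case True
  then obtain m where m: "k = int m" using nonneg_int_cases by blast
  show ?thesis unfolding m by (simp add: pi_of_nat)
next
  case False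
  then obtain m where m: "k = - int m" by (intro that[of "nat (- k)"]) simp
  show ?thesis unfolding m by (simp add: pi_of_nat pi_uminus)
qed

lemma pi_power[simp]: "padic_integer (a ^ n) = padic_integer (a :: 'p::prime_card padic_int) ^ n"
  by (induction n) (simp_all add: pi_one pi_mult)

lemma pi_inj: "padic_integer a = padic_integer b \<Longrightarrow> a = (b :: 'p::prime_card padic_int)"
  by (simp add: padic_integer_def eq_fract)

lemma Fract_as_div: "b \<noteq> 0 \<Longrightarrow> Fraction_Field.Fract a b = padic_integer a / padic_integer (b :: 'p::prime_card padic_int)"
  by (simp add: padic_integer_def)

lemma of_int_padic_int_eq0:
  assumes "(of_int k :: 'p::prime_card padic_int) = 0"
  shows "k = 0"
proof (rule ccontr)
  assume k: "k \<noteq> 0"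
  define n where "n = nat \<bar>k\<bar>"
  define p where "p = int CARD('p)"
  have "k mod p ^ n = 0" using pd_of_int[of k n, where 'p='p] assms by (simp add: pd_zero p_def)
  then have "p ^ n dvd k" by (simp add: dvd_eq_mod_eq_0)
  then have le: "\<bar>p ^ n\<bar> \<le> \<bar>k\<bar>" using k by (rule dvd_imp_le_int[rotated])
  have "p \<ge> 2" using p_gt1[where 'p='p] unfolding p_def by simp
  then have "(2::int) ^ n \<le> p ^ n" by (intro power_mono) auto
  moreover have "int n < 2 ^ n"
  proof -
    have "n < 2 ^ n" by (rule less_exp)
    then have "int n < int (2 ^ n)" by (simp only: of_nat_less_iff)
    then show ?thesis by simp
  qed
  moreover have "int n = \<bar>k\<bar>" unfolding n_def by simp
  ultimately have "\<bar>k\<bar> < \<bar>p ^ n\<bar>" by simp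
  then show False using le by simp
qed

lemma of_int_padic_inj: "inj (of_int :: int \<Rightarrow> 'p::prime_card padic)"
proof (rule injI)
  fix a b :: int
  assume "(of_int a :: 'p padic) = of_int b"
  then have "padic_integer (of_int a :: 'p padic_int) = padic_integer (of_int b)" by (simp add: pi_of_int)
  then have "(of_int a :: 'p padic_int) = of_int b" by (rule pi_inj)
  then have "(of_int (a - b) :: 'p padic_int) = 0" by simp
  then show "a = b" using of_int_padic_int_eq0 by fastforce
qed

abbreviation PP :: "'p::prime_card padic" where "PP \<equiv> of_nat CARD('p)"

lemma PP_pi: "(PP :: 'p::prime_card padic) = padic_integer (of_int (int CARD('p)))"
  by (simp only: of_int_of_nat_eq pi_of_nat)

lemma PP_nz[simp]: "(PP :: 'p::prime_card padic) \<noteq> 0"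
proof
  assume "(PP :: 'p padic) = 0"
  then have "(of_int (int CARD('p)) :: 'p padic) = of_int 0" by simp
  then have "int CARD('p) = 0" using of_int_padic_inj[where 'p='p] unfolding inj_def by blast
  then show False using card_pos[where 'a='p] by simp
qed

definition Bl :: "nat \<Rightarrow> 'p::prime_card padic set" where
  "Bl n = {x. \<exists>z. x = PP ^ n * padic_integer z}"

lemma padic_ball_Bl: "x \<in> padic_ball a n \<longleftrightarrow> x - a \<in> Bl n"
  by (simp add: padic_ball_def Bl_def)

lemma BlI: "x = PP ^ n * padic_integer z \<Longrightarrow> x \<in> Bl n"
  unfolding Bl_def by blast

lemma BlE: "x \<in> Bl n \<Longrightarrow> (\<And>z. x = PP ^ n * padic_integer z \<Longrightarrow> thesis) \<Longrightarrow> thesis"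
  unfolding Bl_def by blast

lemma Bl_zero: "0 \<in> Bl n"
  by (rule BlI[of _ _ 0]) (simp add: pi_zero)

lemma Bl_add: "x \<in> Bl n \<Longrightarrow> y \<in> Bl n \<Longrightarrow> x + y \<in> Bl n"
proof -
  assume "x \<in> Bl n" "y \<in> Bl n"
  then obtain z1 z2 where "x = PP ^ n * padic_integer z1" "y = PP ^ n * padic_integer z2" by (meson BlE)
  then show ?thesis by (intro BlI[of _ _ "z1 + z2"]) (simp add: pi_add distrib_left)
qed

lemma Bl_uminus: "x \<in> Bl n \<Longrightarrow> - x \<in> Bl n"
proof -
  assume "x \<in> Bl n"
  then obtain z1 where "x = PP ^ n * padic_integer z1" by (meson BlE)
  then show ?thesis by (intro BlI[of _ _ "- z1"]) (simp add: pi_uminus)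
qed

lemma Bl_diff: "x \<in> Bl n \<Longrightarrow> y \<in> Bl n \<Longrightarrow> x - y \<in> Bl n"
  using Bl_add[of x n "- y"] Bl_uminus[of y n] by simp

lemma Bl_mult: "x \<in> Bl n \<Longrightarrow> y \<in> Bl m \<Longrightarrow> x * y \<in> Bl (n + m)"
proof -
  assume "x \<in> Bl n" "y \<in> Bl m"
  then obtain z1 z2 where "x = PP ^ n * padic_integer z1" "y = PP ^ m * padic_integer z2" by (meson BlE)
  then show ?thesis by (intro BlI[of _ _ "z1 * z2"]) (simp add: pi_mult power_add mult_ac)
qed

lemma Bl_mult0: "x \<in> Bl 0 \<Longrightarrow> y \<in> Bl m \<Longrightarrow> x * y \<in> Bl m"
  using Bl_mult[of x 0 y m] by simp

lemma Bl_pi: "padic_integer z \<in> Bl 0"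
  by (rule BlI[of _ _ z]) simp

lemma Bl_of_int: "of_int u \<in> Bl 0"
  using Bl_pi[of "of_int u"] by (simp add: pi_of_int)

lemma Bl_one: "1 \<in> Bl 0"
  using Bl_of_int[of 1] by simp

lemma Bl_PP: "(PP :: 'p::prime_card padic) ^ n \<in> Bl n"
  by (rule BlI[of _ _ 1]) (simp add: pi_one)

lemma Bl_mono: "m \<le> n \<Longrightarrow> (x :: 'p::prime_card padic) \<in> Bl n \<Longrightarrow> x \<in> Bl m"
proof -
  assume mn: "m \<le> n" and x: "x \<in> Bl n"
  from x obtain z where z: "x = PP ^ n * padic_integer z" by (rule BlE)
  have "x = PP ^ m * padic_integer (of_int (int CARD('p) ^ (n - m)) * z)"
  proof -
    have "PP ^ n = (PP :: 'p padic) ^ m * PP ^ (n - m)" using mn by (simp add: power_add[symmetric])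
    then have "PP ^ n * padic_integer z = PP ^ m * (PP ^ (n - m) * padic_integer z)" by (simp only: mult.assoc)
    then show ?thesis unfolding z by simp
  qed
  then show ?thesis by (rule BlI)
qed

lemma Bl_PP_mult: "x \<in> Bl n \<Longrightarrow> PP ^ k * x \<in> Bl (n + k)"
  using Bl_mult[OF Bl_PP[of k] , of x n] by (simp add: add.commute)

lemma Bl_div_PP: "(x :: 'p::prime_card padic) \<in> Bl (n + k) \<Longrightarrow> x / PP ^ k \<in> Bl n"
proof -
  assume "x \<in> Bl (n + k)"
  then obtain z where z: "x = PP ^ (n + k) * padic_integer z" by (rule BlE)
  have "x = (PP ^ n * padic_integer z) * PP ^ k" unfolding z by (simp only: power_add mult_ac)
  then have "x / PP ^ k = PP ^ n * padic_integer z" by simp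
  then show ?thesis by (rule BlI)
qed

lemma Bl_Suc_sub: "x \<in> Bl (Suc n) \<Longrightarrow> x \<in> Bl n"
  by (rule Bl_mono[of n "Suc n"]) auto

section \<open>Structure of Q_p\<close>

lemma K_repr: "\<exists>z k. (x :: 'p::prime_card padic) = padic_integer z / PP ^ k"
proof -
  define p where "p = int CARD('p)"
  have p0: "p > 0" unfolding p_def using card_pos by blast
  obtain a b where x: "x = Fraction_Field.Fract a b" and b: "b \<noteq> (0 :: 'p padic_int)" by (cases x) auto
  have "padic_digits b \<noteq> padic_digits (0 :: 'p padic_int)"
  proof
    assume "padic_digits b = padic_digits (0 :: 'p padic_int)"
    then have "b = 0" by (simp add: padic_digits_inject)
    then show False using b by simp
  qed
  then have "\<exists>m. padic_digits b m \<noteq> 0" by (auto simp: pd_zero fun_eq_iff)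
  then obtain m where "padic_digits b m \<noteq> 0" by blast
  then have ex: "\<exists>k. padic_digits b (Suc k) \<noteq> 0" by (cases m) (auto simp: pd_0)
  define v where "v = (LEAST k. padic_digits b (Suc k) \<noteq> 0)"
  have bv1: "padic_digits b (Suc v) \<noteq> 0" unfolding v_def by (rule LeastI_ex[OF ex])
  have bv: "padic_digits b v = 0"
  proof (cases v)
    case 0 then show ?thesis by (simp add: pd_0)
  next
    case (Suc k)
    have "k < v" using Suc by simp
    then have "\<not> padic_digits b (Suc k) \<noteq> 0" unfolding v_def by (rule not_less_Least)
    then show ?thesis using Suc by simp
  qed
  obtain w where w: "b = of_int (p ^ v) * w" using pd_divisible[OF bv] unfolding p_def by blast
  have nd: "\<not> p dvd padic_digits w 1"
  proof
    assume pd: "p dvd padic_digits w 1"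
    have "padic_digits w (Suc v) mod p = padic_digits w 1" using pd_mod_le[of 1 "Suc v" w] by (simp add: p_def)
    then have "p dvd padic_digits w (Suc v) mod p" using pd by simp
    then have "p dvd padic_digits w (Suc v)" by (simp only: dvd_mod_iff[OF dvd_refl])
    then have d: "p ^ Suc v dvd p ^ v * padic_digits w (Suc v)" by (simp add: mult_dvd_mono)
    have e1: "padic_digits (of_int (p ^ v) :: 'p padic_int) (Suc v) = p ^ v mod p ^ Suc v"
      unfolding p_def by (rule pd_of_int)
    have "padic_digits b (Suc v) = ((p ^ v mod p ^ Suc v) * padic_digits w (Suc v)) mod p ^ Suc v"
      unfolding w by (simp only: pd_mult e1) (simp add: p_def)
    also have "\<dots> = (p ^ v * padic_digits w (Suc v)) mod p ^ Suc v" by (simp only: mod_mult_left_eq)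
    also have "\<dots> = 0" using d by (simp only: dvd_eq_mod_eq_0)
    finally show False using bv1 by simp
  qed
  obtain w' where w': "w * w' = 1" using pd_unit[of w] nd unfolding p_def by blast
  have "x = padic_integer a / padic_integer b" unfolding x using b by (rule Fract_as_div)
  also have "padic_integer b = PP ^ v * padic_integer w"
    unfolding w by (simp add: pi_mult pi_of_int p_def)
  also have "padic_integer a / (PP ^ v * padic_integer w) = padic_integer (a * w') / PP ^ v"
  proof -
    have "padic_integer w * padic_integer w' = 1" using w' by (simp flip: pi_mult)
    then have iw: "inverse (padic_integer w) = padic_integer w'" by (rule inverse_unique)
    show ?thesis by (simp add: divide_inverse iw mult_ac)
  qed
  finally show ?thesis by blast
qed

lemma K_bounded: "\<exists>k. PP ^ k * (x :: 'p::prime_card padic) \<in> Bl 0"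
proof -
  obtain z k where x: "x = padic_integer z / PP ^ k" using K_repr by blast
  have "PP ^ k * x = padic_integer z" unfolding x
    by (simp only: times_divide_eq_right nonzero_mult_div_cancel_left[OF power_not_zero[OF PP_nz]])
  then have "PP ^ k * x \<in> Bl 0" using Bl_pi[of z] by simp
  then show ?thesis by blast
qed

lemma Zp_approx: "\<exists>u::int. padic_integer (z :: 'p::prime_card padic_int) - of_int u \<in> Bl n"
proof -
  define p where "p = int CARD('p)"
  have p0: "p > 0" unfolding p_def using card_pos by blast
  define u where "u = padic_digits z n"
  have "padic_digits (z - of_int u) n = (u - u mod p ^ n) mod p ^ n"
    by (simp only: pd_diff pd_of_int u_def p_def)
  also have "\<dots> = (u - u) mod p ^ n" by (rule mod_diff_right_eq)
  also have "\<dots> = 0" by simp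
  finally obtain w where w: "z - of_int u = of_int (p ^ n) * w" using pd_divisible unfolding p_def by blast
  have "padic_integer z - of_int u = PP ^ n * padic_integer w"
    using arg_cong[OF w, of padic_integer] by (simp add: pi_diff pi_mult pi_of_int p_def)
  then show ?thesis by (blast intro: BlI)
qed

lemma unit_1:
  assumes "(\<eta> :: 'p::prime_card padic) \<in> Bl 1"
  shows "\<exists>w. (1 + \<eta>) * padic_integer w = 1"
proof -
  define p where "p = int CARD('p)"
  have p1: "p > 1" unfolding p_def by (rule p_gt1)
  obtain y where y: "\<eta> = PP ^ 1 * padic_integer y" using assms by (rule BlE)
  define u :: "'p padic_int" where "u = 1 + of_int p * y"
  have e: "1 + \<eta> = padic_integer u" unfolding u_def y by (simp add: pi_add pi_one pi_mult pi_of_int p_def)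
  have e1: "padic_digits (of_int p :: 'p padic_int) 1 = p mod p ^ 1" unfolding p_def by (rule pd_of_int)
  have "padic_digits u 1 = (1 mod p ^ 1 + ((p mod p ^ 1) * padic_digits y 1) mod p ^ 1) mod p ^ 1"
    unfolding u_def by (simp only: pd_add pd_one pd_mult e1) (simp add: p_def)
  also have "\<dots> = 1" using p1 by simp
  finally have "\<not> p dvd padic_digits u 1" using p1 by (simp add: zdvd_not_zless)
  then obtain w where "u * w = 1" using pd_unit unfolding p_def by blast
  then have "(1 + \<eta>) * padic_integer w = 1" unfolding e by (simp add: pi_mult[symmetric] pi_one)
  then show ?thesis by blast
qed

lemma unit_1':
  assumes "(\<eta> :: 'p::prime_card padic) \<in> Bl 1"
  shows "1 + \<eta> \<noteq> 0" "inverse (1 + \<eta>) \<in> Bl 0"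
proof -
  obtain w where w: "(1 + \<eta>) * padic_integer w = 1" using unit_1[OF assms] by blast
  then show "1 + \<eta> \<noteq> 0" by auto
  then have "inverse (1 + \<eta>) = padic_integer w" using w by (simp add: field_simps)
  then show "inverse (1 + \<eta>) \<in> Bl 0" using Bl_pi by simp
qed

lemma K_approx:
  "\<exists>K0. \<forall>K\<ge>K0. \<exists>u::int. (x :: 'p::prime_card padic) - of_int u / PP ^ K \<in> Bl N"
proof -
  obtain z k where x: "x = padic_integer z / PP ^ k" using K_repr by blast
  have "\<exists>u::int. x - of_int u / PP ^ K \<in> Bl N" if K: "K \<ge> k" for K
  proof -
    define z' where "z' = z * of_int (int CARD('p) ^ (K - k))"
    have x': "x = padic_integer z' / PP ^ K"
    proof -
      have "PP ^ K = (PP :: 'p padic) ^ k * PP ^ (K - k)" using K by (simp add: power_add[symmetric])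
      then show ?thesis unfolding x z'_def by (simp add: mult_divide_mult_cancel_right)
    qed
    obtain u where u: "padic_integer z' - of_int u \<in> Bl (N + K)" using Zp_approx by blast
    have "(padic_integer z' - of_int u) / PP ^ K \<in> Bl N" using u by (rule Bl_div_PP)
    then have "x - of_int u / PP ^ K \<in> Bl N" unfolding x' by (simp add: diff_divide_distrib)
    then show ?thesis by blast
  qed
  then show ?thesis by blast
qed

lemma poly_bounded: "\<exists>M. \<forall>s \<in> Bl 0. PP ^ M * poly (q :: 'p::prime_card padic poly) s \<in> Bl 0"
proof (induction q)
  case (pCons a q)
  obtain M where M: "\<forall>s \<in> Bl 0. PP ^ M * poly q s \<in> Bl 0" using pCons.IH by blast
  obtain k where k: "PP ^ k * a \<in> Bl 0" using K_bounded by blast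
  have "PP ^ (k + M) * poly (pCons a q) s \<in> Bl 0" if s: "s \<in> Bl 0" for s
  proof -
    have "PP ^ (k + M) * poly (pCons a q) s = PP ^ M * (PP ^ k * a) + PP ^ k * s * (PP ^ M * poly q s)"
      by (simp add: power_add algebra_simps)
    also have "\<dots> \<in> Bl 0"
    proof (rule Bl_add)
      have PM: "PP ^ M \<in> Bl 0" by (rule Bl_mono[OF _ Bl_PP]) simp
      have Pk: "PP ^ k \<in> Bl 0" by (rule Bl_mono[OF _ Bl_PP]) simp
      show "PP ^ M * (PP ^ k * a) \<in> Bl 0" by (rule Bl_mult0[OF PM k])
      show "PP ^ k * s * (PP ^ M * poly q s) \<in> Bl 0"
        by (rule Bl_mult0[OF Bl_mult0[OF Pk s]]) (use M s in blast)
    qed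
    finally show ?thesis .
  qed
  then show ?case by blast
qed (simp add: Bl_zero)

lemma Bl_le: "(x :: 'p::prime_card padic) \<in> Bl n \<Longrightarrow> m \<le> n \<Longrightarrow> x \<in> Bl m"
  using Bl_mono by blast

lemma Bl_multR0: "x \<in> Bl m \<Longrightarrow> y \<in> Bl 0 \<Longrightarrow> x * y \<in> Bl m"
  using Bl_mult0[of y x m] by (simp add: mult.commute)

lemma Bl_div_PP': "(x :: 'p::prime_card padic) \<in> Bl N \<Longrightarrow> k \<le> N \<Longrightarrow> x / PP ^ k \<in> Bl (N - k)"
  using Bl_div_PP[of x "N - k" k] by simp

lemma core:
  fixes g :: "'p::prime_card padic poly" and t0 \<beta> :: "'p padic" and n :: nat
  assumes g0: "poly g t0 \<noteq> 0"
  shows "\<exists>K u1 u2. (of_int u2 / PP ^ K - t0) * poly g (of_int u2 / PP ^ K) \<noteq> 0 \<and>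
     (of_int u1 / PP ^ K - t0) * poly g (of_int u1 / PP ^ K) /
       ((of_int u2 / PP ^ K - t0) * poly g (of_int u2 / PP ^ K)) - \<beta> \<in> Bl n"
proof -
  define \<gamma> where "\<gamma> = poly g t0"
  have \<gamma>0: "\<gamma> \<noteq> 0" using g0 by (simp add: \<gamma>_def)
  obtain a H where qH: "pcompose g [:t0, 1:] = pCons a H" by (cases "pcompose g [:t0, 1:]") auto
  have gexp0: "poly g (t0 + s) = a + s * poly H s" for s
  proof -
    have "poly g (t0 + s) = poly (pcompose g [:t0, 1:]) s" by (simp add: poly_pcompose)
    also have "\<dots> = a + s * poly H s" by (simp add: qH)
    finally show ?thesis .
  qed
  have a: "a = \<gamma>" using gexp0[of 0] by (simp add: \<gamma>_def)
  have gexp: "poly g (t0 + s) = \<gamma> + s * poly H s" for s using gexp0 a by simp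
  obtain M where M: "\<forall>s\<in>Bl 0. PP ^ M * poly H s \<in> Bl 0" using poly_bounded by blast
  obtain kg where kg: "PP ^ kg * inverse \<gamma> \<in> Bl 0" using K_bounded by blast
  obtain kb where kb: "PP ^ kb * \<beta> \<in> Bl 0" using K_bounded by blast
  define E where "E = n + kb + 1"
  define N where "N = E + (kg + kb + M)"
  have PPN: "(PP :: 'p padic) ^ N \<noteq> 0" using PP_nz by simp
  obtain Ka where Ka: "\<forall>K\<ge>Ka. \<exists>u::int. (t0 + PP ^ N * \<beta>) - of_int u / PP ^ K \<in> Bl (E + N)"
    using K_approx by blast
  obtain Kb where Kb: "\<forall>K\<ge>Kb. \<exists>u::int. (t0 + PP ^ N) - of_int u / PP ^ K \<in> Bl (E + N)"
    using K_approx by blast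
  define K where "K = max Ka Kb"
  obtain u1 where u1: "(t0 + PP ^ N * \<beta>) - of_int u1 / PP ^ K \<in> Bl (E + N)"
    using Ka[rule_format, of K] unfolding K_def by auto
  obtain u2 where u2: "(t0 + PP ^ N) - of_int u2 / PP ^ K \<in> Bl (E + N)"
    using Kb[rule_format, of K] unfolding K_def by auto
  define t1 where "t1 = (of_int u1 / PP ^ K :: 'p padic)"
  define t2 where "t2 = (of_int u2 / PP ^ K :: 'p padic)"
  define d1 where "d1 = (t1 - (t0 + PP ^ N * \<beta>)) / PP ^ N"
  define d2 where "d2 = (t2 - (t0 + PP ^ N)) / PP ^ N"
  have d1: "d1 \<in> Bl E"
  proof -
    have "t1 - (t0 + PP ^ N * \<beta>) \<in> Bl (E + N)" using Bl_uminus[OF u1] by (simp add: t1_def)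
    then show ?thesis unfolding d1_def by (rule Bl_div_PP)
  qed
  have d2: "d2 \<in> Bl E"
  proof -
    have "t2 - (t0 + PP ^ N) \<in> Bl (E + N)" using Bl_uminus[OF u2] by (simp add: t2_def)
    then show ?thesis unfolding d2_def by (rule Bl_div_PP)
  qed
  have s1: "t1 - t0 = PP ^ N * (\<beta> + d1)" unfolding d1_def using PPN by (simp add: field_simps)
  have s2: "t2 - t0 = PP ^ N * (1 + d2)" unfolding d2_def using PPN by (simp add: field_simps)
  have E0: "x \<in> Bl E \<Longrightarrow> x \<in> Bl 0" for x :: "'p padic" by (rule Bl_le) auto
  have E1: "x \<in> Bl E \<Longrightarrow> x \<in> Bl 1" for x :: "'p padic" by (rule Bl_le) (auto simp: E_def)
  have PPN_Bl: "(PP :: 'p padic) ^ N \<in> Bl N" by (rule Bl_PP)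
  have kbs1: "PP ^ kb * (t1 - t0) \<in> Bl N"
  proof -
    have "PP ^ kb * (t1 - t0) = PP ^ N * (PP ^ kb * \<beta>) + PP ^ kb * (PP ^ N * d1)"
      unfolding s1 by (simp add: algebra_simps)
    also have "\<dots> \<in> Bl N"
    proof (rule Bl_add)
      show "PP ^ N * (PP ^ kb * \<beta>) \<in> Bl N" using Bl_multR0[OF PPN_Bl kb] .
      have "PP ^ N * d1 \<in> Bl N" using Bl_mult[OF PPN_Bl d1] by (rule Bl_le) simp
      then show "PP ^ kb * (PP ^ N * d1) \<in> Bl N"
        using Bl_mult0[OF Bl_le[OF Bl_PP[of kb], of 0]] by simp
    qed
    finally show ?thesis .
  qed
  have kbs2: "PP ^ kb * (t2 - t0) \<in> Bl N"
  proof -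
    have "PP ^ kb * (t2 - t0) = PP ^ N * (PP ^ kb * 1) + PP ^ kb * (PP ^ N * d2)"
      unfolding s2 by (simp add: algebra_simps)
    also have "\<dots> \<in> Bl N"
    proof (rule Bl_add)
      have "PP ^ N * (PP ^ kb * 1) = (PP :: 'p padic) ^ (N + kb)" by (simp add: power_add)
      then show "(PP :: 'p padic) ^ N * (PP ^ kb * 1) \<in> Bl N" using Bl_le[OF Bl_PP[of "N + kb"], of N] by simp
      have "PP ^ N * d2 \<in> Bl N" using Bl_mult[OF PPN_Bl d2] by (rule Bl_le) simp
      then show "PP ^ kb * (PP ^ N * d2) \<in> Bl N"
        using Bl_mult0[OF Bl_le[OF Bl_PP[of kb], of 0]] by simp
    qed
    finally show ?thesis .
  qed
  have kbN: "kb \<le> N" unfolding N_def by simp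
  have sZ: "s \<in> Bl 0" if "PP ^ kb * s \<in> Bl N" for s :: "'p padic"
  proof -
    have "PP ^ kb * s / PP ^ kb \<in> Bl (N - kb)" using Bl_div_PP'[OF that kbN] .
    then have "s \<in> Bl (N - kb)" using PP_nz by simp
    then show ?thesis by (rule Bl_le) simp
  qed
  define \<epsilon>1 where "\<epsilon>1 = inverse \<gamma> * (t1 - t0) * poly H (t1 - t0)"
  define \<epsilon>2 where "\<epsilon>2 = inverse \<gamma> * (t2 - t0) * poly H (t2 - t0)"
  have epsB: "inverse \<gamma> * s * poly H s \<in> Bl E" if "PP ^ kb * s \<in> Bl N" for s :: "'p padic"
  proof -
    have sz: "s \<in> Bl 0" using sZ[OF that] .
    have "(PP ^ kg * inverse \<gamma>) * (PP ^ kb * s) * (PP ^ M * poly H s) \<in> Bl N"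
      by (rule Bl_multR0[OF Bl_mult0[OF kg that]]) (use M sz in blast)
    moreover have "(PP ^ kg * inverse \<gamma>) * (PP ^ kb * s) * (PP ^ M * poly H s)
        = (inverse \<gamma> * s * poly H s) * PP ^ (kg + kb + M)"
      by (simp add: power_add mult_ac)
    ultimately have "(inverse \<gamma> * s * poly H s) * PP ^ (kg + kb + M) / PP ^ (kg + kb + M) \<in> Bl (N - (kg + kb + M))"
      by (metis Bl_div_PP' le_add2 N_def)
    then show ?thesis using PP_nz by (simp add: N_def)
  qed
  have e1: "\<epsilon>1 \<in> Bl E" unfolding \<epsilon>1_def by (rule epsB[OF kbs1])
  have e2: "\<epsilon>2 \<in> Bl E" unfolding \<epsilon>2_def by (rule epsB[OF kbs2])
  have g1: "poly g t1 = \<gamma> * (1 + \<epsilon>1)"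
  proof -
    have "poly g t1 = \<gamma> + (t1 - t0) * poly H (t1 - t0)" using gexp[of "t1 - t0"] by simp
    also have "\<dots> = \<gamma> * (1 + \<epsilon>1)" unfolding \<epsilon>1_def using \<gamma>0 by (simp add: field_simps)
    finally show ?thesis .
  qed
  have g2: "poly g t2 = \<gamma> * (1 + \<epsilon>2)"
  proof -
    have "poly g t2 = \<gamma> + (t2 - t0) * poly H (t2 - t0)" using gexp[of "t2 - t0"] by simp
    also have "\<dots> = \<gamma> * (1 + \<epsilon>2)" unfolding \<epsilon>2_def using \<gamma>0 by (simp add: field_simps)
    finally show ?thesis .
  qed
  have ne2: "1 + \<epsilon>2 \<noteq> 0" "inverse (1 + \<epsilon>2) \<in> Bl 0" using unit_1'[OF E1[OF e2]] by auto
  have nd2: "1 + d2 \<noteq> 0" "inverse (1 + d2) \<in> Bl 0" using unit_1'[OF E1[OF d2]] by auto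
  have f2nz: "(t2 - t0) * poly g t2 \<noteq> 0"
    unfolding s2 g2 using PPN \<gamma>0 ne2 nd2 by simp
  have R: "(t1 - t0) * poly g t1 / ((t2 - t0) * poly g t2) - \<beta>
      = ((\<beta> * (\<epsilon>1 - d2 - \<epsilon>2 - d2 * \<epsilon>2) + d1 * (1 + \<epsilon>1)) * inverse (1 + d2)) * inverse (1 + \<epsilon>2)"
  proof -
    define A where "A = (\<beta> + d1) * (1 + \<epsilon>1)"
    define D where "D = (1 + d2) * (1 + \<epsilon>2)"
    have D0: "D \<noteq> 0" unfolding D_def using ne2(1) nd2(1) by simp
    have c0: "PP ^ N * \<gamma> \<noteq> 0" using PPN \<gamma>0 by simp
    have "(t1 - t0) * poly g t1 / ((t2 - t0) * poly g t2) = (PP ^ N * \<gamma> * A) / (PP ^ N * \<gamma> * D)"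
      unfolding s1 s2 g1 g2 A_def D_def by (simp only: mult_ac)
    also have "\<dots> = A / D" using c0 by (rule mult_divide_mult_cancel_left)
    finally have "(t1 - t0) * poly g t1 / ((t2 - t0) * poly g t2) - \<beta> = A / D - \<beta> * D / D"
      using D0 by simp
    also have "\<dots> = (A - \<beta> * D) / D" by (rule diff_divide_distrib[symmetric])
    also have "A - \<beta> * D = \<beta> * (\<epsilon>1 - d2 - \<epsilon>2 - d2 * \<epsilon>2) + d1 * (1 + \<epsilon>1)"
      unfolding A_def D_def by (simp add: algebra_simps)
    also have "(\<beta> * (\<epsilon>1 - d2 - \<epsilon>2 - d2 * \<epsilon>2) + d1 * (1 + \<epsilon>1)) / D
       = ((\<beta> * (\<epsilon>1 - d2 - \<epsilon>2 - d2 * \<epsilon>2) + d1 * (1 + \<epsilon>1)) * inverse (1 + d2)) * inverse (1 + \<epsilon>2)"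
      unfolding D_def by (simp add: divide_inverse mult.assoc)
    finally show ?thesis .
  qed
  have X: "\<epsilon>1 - d2 - \<epsilon>2 - d2 * \<epsilon>2 \<in> Bl E"
  proof -
    have "d2 * \<epsilon>2 \<in> Bl E" using Bl_mult[OF d2 e2] by (rule Bl_le) simp
    then show ?thesis using e1 d2 e2 by (intro Bl_diff) auto
  qed
  have bX: "\<beta> * (\<epsilon>1 - d2 - \<epsilon>2 - d2 * \<epsilon>2) \<in> Bl n"
  proof -
    have "(PP ^ kb * \<beta>) * (\<epsilon>1 - d2 - \<epsilon>2 - d2 * \<epsilon>2) \<in> Bl E" using Bl_mult0[OF kb X] .
    then have "(PP ^ kb * \<beta>) * (\<epsilon>1 - d2 - \<epsilon>2 - d2 * \<epsilon>2) / PP ^ kb \<in> Bl (E - kb)"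
      by (rule Bl_div_PP') (simp add: E_def)
    then have "\<beta> * (\<epsilon>1 - d2 - \<epsilon>2 - d2 * \<epsilon>2) \<in> Bl (E - kb)" using PP_nz by simp
    then show ?thesis by (rule Bl_le) (simp add: E_def)
  qed
  have d1e: "d1 * (1 + \<epsilon>1) \<in> Bl n"
  proof -
    have "1 + \<epsilon>1 \<in> Bl 0" using Bl_one E0[OF e1] by (rule Bl_add)
    then have "d1 * (1 + \<epsilon>1) \<in> Bl E" using d1 by (rule Bl_multR0[rotated])
    then show ?thesis by (rule Bl_le) (simp add: E_def)
  qed
  have "(t1 - t0) * poly g t1 / ((t2 - t0) * poly g t2) - \<beta> \<in> Bl n"
    unfolding R by (rule Bl_multR0[OF Bl_multR0[OF Bl_add[OF bX d1e] nd2(2)] ne2(2)])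
  then show ?thesis using f2nz unfolding t1_def t2_def by blast
qed

lemma dvd_prod_diff:
  fixes f g :: "'i \<Rightarrow> 'a::comm_ring_1"
  shows "(\<And>i. i \<in> A \<Longrightarrow> l dvd f i - g i) \<Longrightarrow> l dvd (\<Prod>i\<in>A. f i) - (\<Prod>i\<in>A. g i)"
proof (induction A rule: infinite_finite_induct)
  case (insert a A)
  have e: "(\<Prod>i\<in>insert a A. f i) - (\<Prod>i\<in>insert a A. g i)
     = f a * ((\<Prod>i\<in>A. f i) - (\<Prod>i\<in>A. g i)) + (f a - g a) * (\<Prod>i\<in>A. g i)"
    using insert.hyps by (simp add: algebra_simps)
  show ?case unfolding e using insert by (intro dvd_add dvd_mult dvd_mult2) auto
qed auto

lemma dvd_power_diff:
  fixes a b :: "'a::comm_ring_1"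
  shows "l dvd a - b \<Longrightarrow> l dvd a ^ n - b ^ n"
proof (induction n)
  case (Suc n)
  have e: "a ^ Suc n - b ^ Suc n = a * (a ^ n - b ^ n) + (a - b) * b ^ n" by (simp add: algebra_simps)
  show ?case unfolding e using Suc by (intro dvd_add dvd_mult dvd_mult2) auto
qed simp

lemma dvd_meval_diff:
  fixes \<phi> :: "'a::comm_ring_1 \<Rightarrow> 'b::comm_ring_1"
  assumes "\<And>i. l dvd \<sigma> i - \<tau> i"
  shows "l dvd meval \<phi> \<sigma> P - meval \<phi> \<tau> P"
proof -
  have "meval \<phi> \<sigma> P - meval \<phi> \<tau> P = (\<Sum>m\<in>Poly_Mapping.keys P. \<phi> (Poly_Mapping.lookup P m) * (mmono \<sigma> m - mmono \<tau> m))"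
    by (simp add: meval_def sum_subtractf algebra_simps)
  also have "l dvd \<dots>"
    by (intro dvd_sum dvd_mult) (unfold mmono_def, intro dvd_prod_diff dvd_power_diff assms)
  finally show ?thesis .
qed

lemma meval_comp:
  "meval id x (meval Const \<sigma> P) = meval id (\<lambda>i. meval id x (\<sigma> i)) (P :: 'a::comm_ring_1 mpoly)"
proof -
  have "meval Const \<sigma> P = (\<Sum>m\<in>Poly_Mapping.keys P. Const (Poly_Mapping.lookup P m) * (\<Prod>i\<in>Poly_Mapping.keys m. \<sigma> i ^ Poly_Mapping.lookup m i))"
    by (simp add: meval_def mmono_def)
  then have "meval id x (meval Const \<sigma> P) = (\<Sum>m\<in>Poly_Mapping.keys P. Poly_Mapping.lookup P m *
      (\<Prod>i\<in>Poly_Mapping.keys m. meval id x (\<sigma> i) ^ Poly_Mapping.lookup m i))"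
    by (simp only: meval_sum[OF is_hom_id] meval_mult[OF is_hom_id] meval_prod[OF is_hom_id]
        meval_power[OF is_hom_id] meval_Const[OF is_hom_id] id_apply)
  also have "\<dots> = meval id (\<lambda>i. meval id x (\<sigma> i)) P"
    by (simp only: meval_def[of _ _ P] mmono_def id_apply)
  finally show ?thesis .
qed

lemma lin_keys:
  assumes "homogeneous 1 L" "m \<in> Poly_Mapping.keys L"
  shows "\<exists>i. m = Poly_Mapping.single i 1"
proof -
  have s: "(\<Sum>i\<in>Poly_Mapping.keys m. Poly_Mapping.lookup m i) = 1"
    using assms unfolding homogeneous_def by blast
  then have "Poly_Mapping.keys m \<noteq> {}" by auto
  then obtain i where i: "i \<in> Poly_Mapping.keys m" by blast
  have "(\<Sum>k\<in>Poly_Mapping.keys m. Poly_Mapping.lookup m k) = Poly_Mapping.lookup m i + (\<Sum>k\<in>Poly_Mapping.keys m - {i}. Poly_Mapping.lookup m k)"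
    using i by (simp add: sum.remove)
  moreover have "Poly_Mapping.lookup m i \<ge> 1" using i by (simp add: in_keys_iff)
  ultimately have mi: "Poly_Mapping.lookup m i = 1" and rest: "(\<Sum>k\<in>Poly_Mapping.keys m - {i}. Poly_Mapping.lookup m k) = 0"
    using s by linarith+
  have "\<forall>k\<in>Poly_Mapping.keys m - {i}. Poly_Mapping.lookup m k = 0" using rest by simp
  then have "Poly_Mapping.keys m - {i} = {}" by (auto simp: in_keys_iff)
  have "m = Poly_Mapping.single i 1"
  proof (rule poly_mapping_eqI)
    fix k
    show "Poly_Mapping.lookup m k = Poly_Mapping.lookup (Poly_Mapping.single i 1) k"
    proof (cases "k = i")
      case True then show ?thesis using mi by simp
    next
      case False
      then have "k \<notin> Poly_Mapping.keys m" using \<open>Poly_Mapping.keys m - {i} = {}\<close> by auto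
      then show ?thesis using False by (simp add: in_keys_iff lookup_single_not_eq)
    qed
  qed
  then show ?thesis by blast
qed

lemma lin_eval:
  fixes L :: "'a::comm_ring_1 mpoly"
  assumes "homogeneous 1 L"
  shows "mpoly_eval L (\<lambda>i. x i + (if i = j then t else 0)) = mpoly_eval L x + t * Poly_Mapping.lookup L (Poly_Mapping.single j 1)"
proof -
  let ?y = "\<lambda>i. x i + (if i = j then t else 0)"
  have d: "mmono ?y m - mmono x m = (if m = Poly_Mapping.single j 1 then t else 0)" if mL: "m \<in> Poly_Mapping.keys L" for m
  proof -
    obtain i where m: "m = Poly_Mapping.single i 1" using lin_keys[OF assms mL] by blast
    have "Poly_Mapping.single i (1::nat) = Poly_Mapping.single j 1 \<longleftrightarrow> i = j"
      by (metis lookup_single_eq lookup_single_not_eq zero_neq_one)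
    then show ?thesis unfolding m by auto
  qed
  have "mpoly_eval L ?y - mpoly_eval L x = (\<Sum>m\<in>Poly_Mapping.keys L. Poly_Mapping.lookup L m * (mmono ?y m - mmono x m))"
    by (simp add: mpoly_eval_meval meval_def sum_subtractf algebra_simps)
  also have "\<dots> = (\<Sum>m\<in>Poly_Mapping.keys L. if m = Poly_Mapping.single j 1 then Poly_Mapping.lookup L m * t else 0)"
    by (intro sum.cong refl) (simp add: d)
  also have "\<dots> = t * Poly_Mapping.lookup L (Poly_Mapping.single j 1)"
    by (auto simp: in_keys_iff mult.commute)
  finally show ?thesis by (simp add: algebra_simps)
qed

lemma lookup_map_of_int: "Poly_Mapping.lookup (Poly_Mapping.map of_int F) m = (of_int (Poly_Mapping.lookup F m) :: 'a::ring_1)"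
  by (simp add: Poly_Mapping.map.rep_eq when_def)

lemma keys_map_of_int: "Poly_Mapping.keys (Poly_Mapping.map (of_int :: int \<Rightarrow> 'a::ring_1) F) \<subseteq> Poly_Mapping.keys F"
  by (auto simp: in_keys_iff lookup_map_of_int)

lemma eval_map_of_int:
  "mpoly_eval (Poly_Mapping.map of_int F) (\<lambda>i. of_int (y i)) = (of_int (mpoly_eval F y) :: 'a::comm_ring_1)"
proof -
  have "mpoly_eval (Poly_Mapping.map of_int F) (\<lambda>i. of_int (y i)) =
     (\<Sum>m\<in>Poly_Mapping.keys F. of_int (Poly_Mapping.lookup F m) * mmono (\<lambda>i. (of_int (y i) :: 'a)) m)"
    unfolding mpoly_eval_meval using keys_map_of_int[of F]
    by (subst meval_superset[where S="Poly_Mapping.keys F"]) (auto simp: lookup_map_of_int)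
  also have "\<dots> = of_int (mpoly_eval F y)"
    by (simp add: mpoly_eval_def mmono_def)
  finally show ?thesis .
qed

lemma homogeneous_map_of_int: "homogeneous d F \<Longrightarrow> homogeneous d (Poly_Mapping.map (of_int :: int \<Rightarrow> 'a::ring_1) F)"
  unfolding homogeneous_def using keys_map_of_int[of F] by blast

lemma eval_homog:
  fixes P :: "'a::comm_ring_1 mpoly"
  assumes "homogeneous d P"
  shows "mpoly_eval P (\<lambda>i. c * z i) = c ^ d * mpoly_eval P z"
proof -
  have mm: "mmono (\<lambda>i. c * z i) m = c ^ d * mmono z m" if "m \<in> Poly_Mapping.keys P" for m
  proof -
    have "mmono (\<lambda>i. c * z i) m = (\<Prod>i\<in>Poly_Mapping.keys m. c ^ Poly_Mapping.lookup m i) * mmono z m"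
      by (simp add: mmono_def power_mult_distrib prod.distrib)
    also have "(\<Prod>i\<in>Poly_Mapping.keys m. c ^ Poly_Mapping.lookup m i) = c ^ (\<Sum>i\<in>Poly_Mapping.keys m. Poly_Mapping.lookup m i)"
      by (simp only: power_sum)
    also have "(\<Sum>i\<in>Poly_Mapping.keys m. Poly_Mapping.lookup m i) = d"
      using assms that unfolding homogeneous_def by blast
    finally show ?thesis .
  qed
  show ?thesis unfolding mpoly_eval_meval meval_def
    by (simp add: mm sum_distrib_left mult_ac cong: sum.cong)
qed

theorem lemma2p10:
  fixes r :: nat
    and F :: "int mpoly"
    and L :: "'p::prime_card padic mpoly"
  assumes "integral_form r F"
    and "linear_form r L" and "L \<noteq> 0"
    and "dvd_in r L (Poly_Mapping.map of_int F)"
    and "\<not> dvd_in r (L ^ 2) (Poly_Mapping.map of_int F)"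
  shows "padic_dense (ratio_set r F :: 'p padic set)"
proof -
  obtain d where Fh: "homogeneous d F" using assms(1) unfolding integral_form_def by blast
  define F' where "F' = (Poly_Mapping.map of_int F :: 'p padic mpoly)"
  have F'h: "homogeneous d F'" unfolding F'_def using Fh by (rule homogeneous_map_of_int)
  have Lv: "in_vars r L" and Lh: "homogeneous 1 L" using assms(2) unfolding linear_form_def by auto
  obtain G where Gv: "in_vars r G" and F'v: "in_vars r F'" and FLG: "F' = L * G"
    using assms(4) unfolding dvd_in_def F'_def by blast
  obtain m where mL: "m \<in> Poly_Mapping.keys L"
  proof -
    have "\<exists>m. Poly_Mapping.lookup L m \<noteq> 0"
    proof (rule ccontr)
      assume "\<not> ?thesis"
      then have "L = 0" by (intro poly_mapping_eqI) auto
      then show False using assms(3) by simp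
    qed
    then show ?thesis using that by (auto simp: in_keys_iff)
  qed
  obtain j where mj: "m = Poly_Mapping.single j 1" using lin_keys[OF Lh mL] by blast
  have jr: "j \<le> r" using Lv mL unfolding in_vars_def mj by auto
  define c where "c = Poly_Mapping.lookup L (Poly_Mapping.single j 1)"
  have c0: "c \<noteq> 0" using mL unfolding c_def mj by (simp add: in_keys_iff)
  define \<sigma> where "\<sigma> i = (if i = j then Var j - Const (inverse c) * L else if i \<le> r then Var i else 0)" for i
  define \<rho> where "\<rho> i = (if i \<le> r then Var i else (0 :: 'p padic mpoly))" for i
  define GH where "GH = meval Const \<sigma> G"
  have \<rho>v: "in_vars r (\<rho> i)" for i unfolding \<rho>_def by (auto intro: in_vars_Var)
  have \<sigma>v: "in_vars r (\<sigma> i)" for i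
    unfolding \<sigma>_def using jr Lv by (auto intro!: in_vars_Var in_vars_diff in_vars_mult in_vars_Const)
  have \<rho>id: "meval Const \<rho> P = P" if "in_vars r P" for P :: "'p padic mpoly"
    using that by (rule meval_Var_agree) (simp add: \<rho>_def)
  have GHv: "in_vars r GH" unfolding GH_def using \<sigma>v by (rule in_vars_meval)
  have "L dvd meval Const \<rho> G - meval Const \<sigma> G"
  proof (rule dvd_meval_diff)
    fix i
    show "L dvd \<rho> i - \<sigma> i"
    proof (cases "i = j")
      case True
      then have "\<rho> i - \<sigma> i = Const (inverse c) * L" using jr by (simp add: \<rho>_def \<sigma>_def)
      then show ?thesis by simp
    next
      case False
      then show ?thesis by (simp add: \<rho>_def \<sigma>_def)
    qed
  qed
  then obtain Q0 where Q0: "G - GH = L * Q0" unfolding GH_def \<rho>id[OF Gv] by (elim dvdE)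
  define Q where "Q = meval Const \<rho> Q0"
  have Qv: "in_vars r Q" unfolding Q_def using \<rho>v by (rule in_vars_meval)
  have GQ: "G - GH = L * Q"
  proof -
    have "G - GH = meval Const \<rho> (G - GH)" using in_vars_diff[OF Gv GHv] by (simp add: \<rho>id)
    also have "\<dots> = meval Const \<rho> L * Q" unfolding Q0 Q_def by (rule meval_mult[OF is_hom_Const])
    also have "meval Const \<rho> L = L" using Lv by (rule \<rho>id)
    finally show ?thesis .
  qed
  have "\<exists>x. (\<forall>i. x i \<in> range of_int) \<and> (\<forall>i>r. x i = 0) \<and> mpoly_eval GH x \<noteq> 0"
  proof (rule ccontr)
    assume "\<not> ?thesis"
    then have "GH = 0" using of_int_padic_inj GHv by (intro mpoly_zero_on_ints) auto
    then have "G = L * Q" using GQ by simp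
    then have "F' = L ^ 2 * Q" using FLG by (simp add: power2_eq_square mult.assoc)
    then have "dvd_in r (L ^ 2) F'" unfolding dvd_in_def using Lv F'v Qv by (auto intro: in_vars_power)
    then show False using assms(5) unfolding F'_def by simp
  qed
  then obtain x where xint: "\<forall>i. x i \<in> range of_int" and x0: "\<forall>i>r. x i = 0" and GHx: "mpoly_eval GH x \<noteq> 0"
    by blast
  define a where "a i = (if i \<le> r then (SOME k. x i = of_int k) else 0)" for i
  have xa: "x i = of_int (a i)" for i
  proof (cases "i \<le> r")
    case True
    have "\<exists>k. x i = of_int k" using xint by auto
    then show ?thesis using True unfolding a_def by (metis (mono_tags) someI_ex)
  next
    case False then show ?thesis using x0 by (simp add: a_def)
  qed
  define t0 where "t0 = - (mpoly_eval L x / c)"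
  let ?sh = "\<lambda>t i. x i + (if i = j then t else 0)"
  have GHx': "mpoly_eval GH x = mpoly_eval G (?sh t0)"
  proof -
    have "mpoly_eval GH x = meval id (\<lambda>i. meval id x (\<sigma> i)) G"
      unfolding GH_def mpoly_eval_meval by (rule meval_comp)
    also have "(\<lambda>i. meval id x (\<sigma> i)) = ?sh t0"
    proof
      fix i
      show "meval id x (\<sigma> i) = ?sh t0 i"
      proof (cases "i = j")
        case True
        then show ?thesis unfolding \<sigma>_def t0_def
          by (simp add: meval_diff[OF is_hom_id] meval_mult[OF is_hom_id] meval_Var[OF is_hom_id]
              meval_Const[OF is_hom_id] mpoly_eval_meval divide_inverse mult.commute)
      next
        case False
        then show ?thesis using x0
          by (cases "i \<le> r") (auto simp: \<sigma>_def meval_Var[OF is_hom_id])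
      qed
    qed
    finally show ?thesis by (simp only: mpoly_eval_meval)
  qed
  define g where "g = meval (\<lambda>c. [:c:]) (\<lambda>i. [:x i:] + (if i = j then [:0, 1:] else 0)) G"
  have pg: "poly g t = mpoly_eval G (?sh t)" for t
    unfolding g_def poly_meval mpoly_eval_meval by (rule arg_cong[where f="\<lambda>s. meval id s G"]) auto
  have g0: "poly g t0 \<noteq> 0" using GHx GHx' pg by simp
  have Fsh: "mpoly_eval F' (?sh t) = c * ((t - t0) * poly g t)" for t
  proof -
    have "mpoly_eval F' (?sh t) = mpoly_eval L (?sh t) * mpoly_eval G (?sh t)"
      unfolding FLG mpoly_eval_meval by (rule meval_mult[OF is_hom_id])
    also have "mpoly_eval L (?sh t) = mpoly_eval L x + t * c"
      unfolding c_def by (rule lin_eval[OF Lh])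
    also have "mpoly_eval L x + t * c = c * (t - t0)" unfolding t0_def using c0 by (simp add: field_simps)
    finally show ?thesis by (simp add: pg mult.assoc)
  qed
  show ?thesis
    unfolding padic_dense_def
  proof (intro allI)
    fix \<beta> :: "'p padic" and n :: nat
    obtain K u1 u2 where nz: "(of_int u2 / PP ^ K - t0) * poly g (of_int u2 / PP ^ K) \<noteq> 0"
      and cl: "(of_int u1 / PP ^ K - t0) * poly g (of_int u1 / PP ^ K) /
       ((of_int u2 / PP ^ K - t0) * poly g (of_int u2 / PP ^ K)) - \<beta> \<in> Bl n"
      using core[OF g0, of \<beta> n] by blast
    define y where "y u i = (int CARD('p) ^ K * a i + (if i = j then u else 0))" for u :: int and i
    have y0: "\<forall>i>r. y u i = 0" for u using jr by (auto simp: y_def a_def)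
    have Fy: "(of_int (mpoly_eval F (y u)) :: 'p padic) = (PP ^ K) ^ d * (c * ((of_int u / PP ^ K - t0) * poly g (of_int u / PP ^ K)))" for u
    proof -
      have "(\<lambda>i. (of_int (y u i) :: 'p padic)) = (\<lambda>i. PP ^ K * ?sh (of_int u / PP ^ K) i)"
        using PP_nz by (auto simp: y_def xa algebra_simps)
      then have "(of_int (mpoly_eval F (y u)) :: 'p padic) = mpoly_eval F' (\<lambda>i. PP ^ K * ?sh (of_int u / PP ^ K) i)"
        using eval_map_of_int[of F "y u", where 'a="'p padic"] unfolding F'_def by simp
      also have "\<dots> = (PP ^ K) ^ d * mpoly_eval F' (?sh (of_int u / PP ^ K))"
        using eval_homog[OF F'h, of "PP ^ K" "?sh (of_int u / PP ^ K)"] by simp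
      finally show ?thesis by (simp add: Fsh)
    qed
    let ?R = "(of_int (mpoly_eval F (y u1)) / of_int (mpoly_eval F (y u2)) :: 'p padic)"
    have Fy2: "mpoly_eval F (y u2) \<noteq> 0"
    proof
      assume "mpoly_eval F (y u2) = 0"
      then have "(of_int (mpoly_eval F (y u2)) :: 'p padic) = 0" by simp
      then show False using Fy[of u2] nz c0 PP_nz by simp
    qed
    have R: "?R = (of_int u1 / PP ^ K - t0) * poly g (of_int u1 / PP ^ K) /
       ((of_int u2 / PP ^ K - t0) * poly g (of_int u2 / PP ^ K))"
      unfolding Fy using c0 PP_nz by (simp add: mult_divide_mult_cancel_left)
    have "?R \<in> ratio_set r F" unfolding ratio_set_def using y0 Fy2 by blast
    moreover have "?R \<in> padic_ball \<beta> n" unfolding padic_ball_Bl R using cl .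
    ultimately show "ratio_set r F \<inter> padic_ball \<beta> n \<noteq> {}" by blast
  qed
qed

end
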